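(* Every punctually computable function $f:[0,1]\to\mathbb{R}$ is uniformly punctually computable.
   Context: A sequence $(r_i)_{i\in\mathbb{N}}$ of rationals is a fast Cauchy sequence if $|r_i-r_{i+1}|<2^{-i}$ for all $i$. Names of points $x\in[0,1]$ are fast Cauchy sequences converging to $x$ consisting of dyadic rationals in $[0,1]$ (with the $i$-th term of the form $m/2^{i}$), so that the space of names is a compact, primitively recursively branching, totally disconnected space. A primitive recursive functional is one given by a primitive recursive scheme (built from basic functions by composition and primitive recursion) with an additional oracle function symbol interpreted as the name. A function $f:[0,1]\to\mathbb{R}$ is punctually computable if there is a primitive recursive functional $\Phi$ such that for every $x\in[0,1]$ and every name $\chi$ of $x$, $(\Phi^\chi(n))_{n\in\mathbb{N}}$ is a fast Cauchy sequence of rationals converging to $f(x)$. A function $f:[0,1]\to\mathbb{R}$ is uniformly punctually computable if there is a primitive recursive function which on input $i$ outputs (a code of) a polynomial $p_i$ with rational coefficients such that $\sup_{x\in[0,1]}|f(x)-p_i(x)|<2^{-i}$. *)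

theory Defs
  imports Complex_Main "HOL-Library.Nat_Bijection" "HOL-Computational_Algebra.Polynomial"
begin

text \<open>Primitive recursive schemes over nat with one additional unary oracle symbol.
  Arguments are passed as a list; missing arguments read as 0.\<close>

datatype prscheme =
    PZero
  | PSucc
  | PProj nat
  | PComp prscheme "prscheme list"
  | PRec prscheme prscheme
  | POracle

definition arg :: "nat \<Rightarrow> nat list \<Rightarrow> nat" where
  "arg i xs = (if i < length xs then xs ! i else 0)"

primrec peval :: "prscheme \<Rightarrow> (nat \<Rightarrow> nat) \<Rightarrow> nat list \<Rightarrow> nat" where
  "peval PZero \<chi> xs = 0"
| "peval PSucc \<chi> xs = Suc (arg 0 xs)"
| "peval (PProj i) \<chi> xs = arg i xs"
| "peval (PComp f gs) \<chi> xs = peval f \<chi> (map (\<lambda>g. peval g \<chi> xs) gs)"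
| "peval (PRec g h) \<chi> xs =
     rec_nat (peval g \<chi> (drop 1 xs)) (\<lambda>n r. peval h \<chi> (n # r # drop 1 xs)) (arg 0 xs)"
| "peval POracle \<chi> xs = \<chi> (arg 0 xs)"

primrec oracle_free :: "prscheme \<Rightarrow> bool" where
  "oracle_free PZero = True"
| "oracle_free PSucc = True"
| "oracle_free (PProj i) = True"
| "oracle_free (PComp f gs) = (oracle_free f \<and> list_all oracle_free gs)"
| "oracle_free (PRec g h) = (oracle_free g \<and> oracle_free h)"
| "oracle_free POracle = False"

definition decode_rat :: "nat \<Rightarrow> rat" where
  "decode_rat c = (case prod_decode c of (a, b) \<Rightarrow> Fract (int_decode a) (int b + 1))"

definition decode_poly :: "nat \<Rightarrow> real poly" where
  "decode_poly c = Poly (map (\<lambda>k. real_of_rat (decode_rat k)) (list_decode c))"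

definition fast_cauchy :: "(nat \<Rightarrow> rat) \<Rightarrow> bool" where
  "fast_cauchy r \<longleftrightarrow> (\<forall>i. \<bar>r i - r (Suc i)\<bar> < 1 / 2 ^ i)"

text \<open>A name of x: the i-th term is the dyadic rational (\<chi> i)/2^i in [0,1];
  the oracle returns the numerator \<chi> i.\<close>

definition is_name :: "(nat \<Rightarrow> nat) \<Rightarrow> real \<Rightarrow> bool" where
  "is_name \<chi> x \<longleftrightarrow> (\<forall>i. \<chi> i \<le> 2 ^ i)
     \<and> fast_cauchy (\<lambda>i. of_nat (\<chi> i) / 2 ^ i)
     \<and> (\<lambda>i. real (\<chi> i) / 2 ^ i) \<longlonglongrightarrow> x"

definition punctually_computable :: "(real \<Rightarrow> real) \<Rightarrow> bool" where
  "punctually_computable f \<longleftrightarrow> (\<exists>\<Phi>. \<forall>x\<in>{0..1}. \<forall>\<chi>. is_name \<chi> x \<longrightarrow>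
      fast_cauchy (\<lambda>n. decode_rat (peval \<Phi> \<chi> [n]))
      \<and> (\<lambda>n. real_of_rat (decode_rat (peval \<Phi> \<chi> [n]))) \<longlonglongrightarrow> f x)"

definition uniformly_punctually_computable :: "(real \<Rightarrow> real) \<Rightarrow> bool" where
  "uniformly_punctually_computable f \<longleftrightarrow> (\<exists>P. oracle_free P \<and> (\<forall>i.
      bdd_above ((\<lambda>x. \<bar>f x - poly (decode_poly (peval P (\<lambda>_. 0) [i])) x\<bar>) ` {0..1})
      \<and> (SUP x\<in>{0..1}. \<bar>f x - poly (decode_poly (peval P (\<lambda>_. 0) [i])) x\<bar>) < 1 / 2 ^ i))"

end

theory Submission
  imports Defs "HOL-Analysis.Analysis"
begin


named_theorems pr_intros

definition pr :: "(nat list \<Rightarrow> nat) \<Rightarrow> bool" where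
  "pr F \<longleftrightarrow> (\<exists>S. oracle_free S \<and> (\<forall>\<rho> xs. peval S \<rho> xs = F xs))"

lemma arg_Cons_0 [simp]: "arg 0 (a # xs) = a"
  by (simp add: arg_def)
lemma arg_Cons_Suc [simp]: "arg (Suc i) (a # xs) = arg i xs"
  by (simp add: arg_def)
lemma arg_Nil [simp]: "arg i [] = 0"
  by (simp add: arg_def)
lemma arg_drop1: "arg i (drop 1 xs) = arg (Suc i) xs"
  by (cases xs) auto
lemma arg_drop1': "arg i (drop (Suc 0) xs) = arg (Suc i) xs"
  by (cases xs) auto

lemma pr_zero: "pr (\<lambda>xs. 0)"
  unfolding pr_def by (rule exI[of _ PZero]) simp

lemma pr_succ: "pr (\<lambda>xs. Suc (arg 0 xs))"
  unfolding pr_def by (rule exI[of _ PSucc]) simp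

lemma pr_arg [pr_intros]: "pr (\<lambda>xs. arg i xs)"
  unfolding pr_def by (rule exI[of _ "PProj i"]) simp

lemma pr_comp_list:
  assumes "pr F" "\<forall>G\<in>set Gs. pr G"
  shows "pr (\<lambda>xs. F (map (\<lambda>G. G xs) Gs))"
proof -
  have "\<exists>Ss. list_all oracle_free Ss \<and> (\<forall>\<rho> xs. map (\<lambda>S. peval S \<rho> xs) Ss = map (\<lambda>G. G xs) Gs)"
    using assms(2)
  proof (induction Gs)
    case Nil then show ?case by (intro exI[of _ "[]"]) simp
  next
    case (Cons G Gs)
    then obtain Ss where Ss: "list_all oracle_free Ss"
      "\<forall>\<rho> xs. map (\<lambda>S. peval S \<rho> xs) Ss = map (\<lambda>G. G xs) Gs" by auto
    from Cons.prems obtain S where "oracle_free S" "\<forall>\<rho> xs. peval S \<rho> xs = G xs"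
      unfolding pr_def by auto
    then show ?case using Ss by (intro exI[of _ "S # Ss"]) simp
  qed
  then obtain Ss where Ss: "list_all oracle_free Ss"
      "\<forall>\<rho> xs. map (\<lambda>S. peval S \<rho> xs) Ss = map (\<lambda>G. G xs) Gs" by auto
  from assms(1) obtain SF where SF: "oracle_free SF" "\<forall>\<rho> xs. peval SF \<rho> xs = F xs"
    unfolding pr_def by auto
  show ?thesis unfolding pr_def
    by (rule exI[of _ "PComp SF Ss"]) (simp add: SF Ss)
qed

lemma pr_rec_gen:
  assumes "pr G" "pr H"
  shows "pr (\<lambda>xs. rec_nat (G (drop 1 xs)) (\<lambda>n r. H (n # r # drop 1 xs)) (arg 0 xs))"
proof -
  from assms obtain SG SH where "oracle_free SG" "\<forall>\<rho> xs. peval SG \<rho> xs = G xs"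
    "oracle_free SH" "\<forall>\<rho> xs. peval SH \<rho> xs = H xs" unfolding pr_def by blast
  then show ?thesis unfolding pr_def
    by (intro exI[of _ "PRec SG SH"]) simp
qed

lemma pr_comp1:
  assumes "pr (\<lambda>xs. f (arg 0 xs))" "pr A"
  shows "pr (\<lambda>xs. f (A xs))"
  using pr_comp_list[OF assms(1), of "[A]"] assms(2) by simp

lemma pr_comp2:
  assumes "pr (\<lambda>xs. f (arg 0 xs) (arg 1 xs))" "pr A" "pr B"
  shows "pr (\<lambda>xs. f (A xs) (B xs))"
  using pr_comp_list[OF assms(1), of "[A,B]"] assms(2,3) by (simp add: numeral_2_eq_2)

lemma pr_comp3:
  assumes "pr (\<lambda>xs. f (arg 0 xs) (arg 1 xs) (arg 2 xs))" "pr A" "pr B" "pr C"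
  shows "pr (\<lambda>xs. f (A xs) (B xs) (C xs))"
  using pr_comp_list[OF assms(1), of "[A,B,C]"] assms(2-4) by (simp add: numeral_2_eq_2 numeral_3_eq_3)

lemma pr_const [pr_intros]: "pr (\<lambda>xs. c)"
proof (induction c)
  case 0 then show ?case by (rule pr_zero)
next
  case (Suc c)
  show ?case using pr_comp1[OF pr_succ Suc] .
qed

lemma pr_rec2:
  assumes "pr (\<lambda>ys. g (arg 0 ys) (arg 1 ys))"
    "pr (\<lambda>ys. h (arg 0 ys) (arg 1 ys) (arg 2 ys) (arg 3 ys))"
    "pr N" "pr P" "pr Q"
  shows "pr (\<lambda>xs. rec_nat (g (P xs) (Q xs)) (\<lambda>k r. h k r (P xs) (Q xs)) (N xs))"
proof -
  have "pr (\<lambda>xs. rec_nat (g (arg 1 xs) (arg 2 xs)) (\<lambda>k r. h k r (arg 1 xs) (arg 2 xs)) (arg 0 xs))"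
    using pr_rec_gen[OF assms(1,2)] by (simp add: arg_drop1' numeral_2_eq_2 numeral_3_eq_3)
  from pr_comp3[OF this assms(3,4,5)] show ?thesis .
qed

lemma pr_Suc [pr_intros]: "pr A \<Longrightarrow> pr (\<lambda>xs. Suc (A xs))"
  by (rule pr_comp1[OF pr_succ])

lemma pr_add [pr_intros]: "pr A \<Longrightarrow> pr B \<Longrightarrow> pr (\<lambda>xs. A xs + B xs)"
proof -
  assume a: "pr A" "pr B"
  have "pr (\<lambda>xs. rec_nat ((\<lambda>p q. p) (arg 1 xs) (arg 0 xs)) (\<lambda>k r. (\<lambda>k r p q. Suc r) k r (arg 1 xs) (arg 0 xs)) (arg 0 xs))"
    by (rule pr_rec2[where g="\<lambda>p q. p" and h="\<lambda>k r p q. Suc r" and N="\<lambda>xs. arg 0 xs" and P="\<lambda>xs. arg 1 xs" and Q="\<lambda>xs. arg 0 xs"]) (rule pr_intros)+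
  moreover have "rec_nat p (\<lambda>k r. Suc r) m = m + p" for m p :: nat by (induction m) auto
  ultimately have "pr (\<lambda>xs. arg 0 xs + arg 1 xs)" by simp
  from pr_comp2[OF this a] show ?thesis .
qed

lemma pr_pred: "pr (\<lambda>xs. arg 0 xs - 1)"
proof -
  have "pr (\<lambda>xs. rec_nat ((\<lambda>p q. 0) (arg 0 xs) (arg 0 xs)) (\<lambda>k r. (\<lambda>k r p q. k) k r (arg 0 xs) (arg 0 xs)) (arg 0 xs))"
    by (rule pr_rec2[where g="\<lambda>p q. 0" and h="\<lambda>k r p q. k" and N="\<lambda>xs. arg 0 xs" and P="\<lambda>xs. arg 0 xs" and Q="\<lambda>xs. arg 0 xs"]) (rule pr_intros)+
  moreover have "rec_nat 0 (\<lambda>k r. k) m = m - 1" for m :: nat by (induction m) auto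
  ultimately show ?thesis by simp
qed

lemma pr_minus [pr_intros]: "pr A \<Longrightarrow> pr B \<Longrightarrow> pr (\<lambda>xs. A xs - B xs)"
proof -
  assume a: "pr A" "pr B"
  have "pr (\<lambda>xs. rec_nat ((\<lambda>p q. p) (arg 1 xs) (arg 0 xs)) (\<lambda>k r. (\<lambda>k r p q. r - 1) k r (arg 1 xs) (arg 0 xs)) (arg 0 xs))"
    by (rule pr_rec2[where g="\<lambda>p q. p" and h="\<lambda>k r p q. r - 1" and N="\<lambda>xs. arg 0 xs" and P="\<lambda>xs. arg 1 xs" and Q="\<lambda>xs. arg 0 xs"]) (rule pr_arg pr_comp1[OF pr_pred pr_arg])+
  moreover have "rec_nat p (\<lambda>k r. r - 1) m = p - m" for m p :: nat by (induction m) auto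
  ultimately have "pr (\<lambda>xs. arg 1 xs - arg 0 xs)" by simp
  from pr_comp2[OF this a(2,1)] show ?thesis .
qed

lemma pr_mult [pr_intros]: "pr A \<Longrightarrow> pr B \<Longrightarrow> pr (\<lambda>xs. A xs * B xs)"
proof -
  assume a: "pr A" "pr B"
  have "pr (\<lambda>xs. rec_nat ((\<lambda>p q. 0) (arg 1 xs) (arg 0 xs)) (\<lambda>k r. (\<lambda>k r p q. r + p) k r (arg 1 xs) (arg 0 xs)) (arg 0 xs))"
    by (rule pr_rec2[where g="\<lambda>p q. 0" and h="\<lambda>k r p q. r + p" and N="\<lambda>xs. arg 0 xs" and P="\<lambda>xs. arg 1 xs" and Q="\<lambda>xs. arg 0 xs"]) (rule pr_intros)+
  moreover have "rec_nat 0 (\<lambda>k r. r + p) m = m * p" for m p :: nat by (induction m) auto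
  ultimately have "pr (\<lambda>xs. arg 0 xs * arg 1 xs)" by simp
  from pr_comp2[OF this a] show ?thesis .
qed

lemma pr_power [pr_intros]: "pr A \<Longrightarrow> pr B \<Longrightarrow> pr (\<lambda>xs. A xs ^ B xs)"
proof -
  assume a: "pr A" "pr B"
  have "pr (\<lambda>xs. rec_nat ((\<lambda>p q. 1) (arg 1 xs) (arg 0 xs)) (\<lambda>k r. (\<lambda>k r p q. r * p) k r (arg 1 xs) (arg 0 xs)) (arg 0 xs))"
    by (rule pr_rec2[where g="\<lambda>p q. 1" and h="\<lambda>k r p q. r * p" and N="\<lambda>xs. arg 0 xs" and P="\<lambda>xs. arg 1 xs" and Q="\<lambda>xs. arg 0 xs"]) (rule pr_intros)+
  moreover have "rec_nat 1 (\<lambda>k r. r * p) m = p ^ m" for m p :: nat by (induction m) auto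
  ultimately have "pr (\<lambda>xs. arg 1 xs ^ arg 0 xs)" by simp
  from pr_comp2[OF this a(2,1)] show ?thesis .
qed

lemma pr_fact [pr_intros]: "pr A \<Longrightarrow> pr (\<lambda>xs. fact (A xs))"
proof -
  assume a: "pr A"
  have "pr (\<lambda>xs. rec_nat ((\<lambda>p q. 1) (arg 0 xs) (arg 0 xs)) (\<lambda>k r. (\<lambda>k r p q. r * Suc k) k r (arg 0 xs) (arg 0 xs)) (arg 0 xs))"
    by (rule pr_rec2[where g="\<lambda>p q. 1" and h="\<lambda>k r p q. r * Suc k" and N="\<lambda>xs. arg 0 xs" and P="\<lambda>xs. arg 0 xs" and Q="\<lambda>xs. arg 0 xs"]) (rule pr_intros)+
  moreover have "rec_nat 1 (\<lambda>k r. r * Suc k) m = (fact m :: nat)" for m :: nat by (induction m) auto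
  ultimately have "pr (\<lambda>xs. fact (arg 0 xs) :: nat)" by simp
  from pr_comp1[OF this a] show ?thesis .
qed

lemma pr_ite_le [pr_intros]: "pr A \<Longrightarrow> pr B \<Longrightarrow> pr C \<Longrightarrow> pr D \<Longrightarrow>
   pr (\<lambda>xs. if A xs \<le> B xs then C xs else D xs)"
proof -
  assume a: "pr A" "pr B" "pr C" "pr D"
  have e: "(if A xs \<le> B xs then C xs else D xs) =
    C xs * (1 - (A xs - B xs)) + D xs * (1 - (1 - (A xs - B xs)))" for xs
    by auto
  show ?thesis unfolding e by (intro pr_intros a)
qed

lemma pr_sum2:
  assumes "pr (\<lambda>ys. t (arg 0 ys) (arg 1 ys) (arg 2 ys))" "pr N" "pr P" "pr Q"
  shows "pr (\<lambda>xs. \<Sum>k<N xs. t k (P xs) (Q xs))"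
proof -
  have "pr (\<lambda>xs. rec_nat ((\<lambda>p q. 0) (P xs) (Q xs)) (\<lambda>k r. (\<lambda>k r p q. r + t k p q) k r (P xs) (Q xs)) (N xs))"
    apply (rule pr_rec2[where g="\<lambda>p q. 0" and h="\<lambda>k r p q. r + t k p q"])
        apply (rule pr_const)
       apply (rule pr_add, rule pr_arg)
       apply (rule pr_comp3[OF assms(1)]; rule pr_arg)
    using assms by auto
  moreover have "rec_nat 0 (\<lambda>k r. r + t k p q) m = (\<Sum>k<m. t k p q)" for m p q by (induction m) auto
  ultimately show ?thesis by simp
qed

lemma div_as_sum: "x div y = (\<Sum>t<x. if Suc t * y \<le> x then 1 else 0)" if "y > 0" for x y :: nat
proof -
  have eq: "Suc t * y \<le> x \<longleftrightarrow> t < x div y" for t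
    using that less_eq_div_iff_mult_less_eq[of y "Suc t" x] by auto
  have d: "x div y \<le> x" by simp
  have "(\<Sum>t<x. if Suc t * y \<le> x then 1 else (0::nat)) = (\<Sum>t<x. if t < x div y then 1 else 0)"
    by (rule sum.cong[OF refl]) (simp only: eq)
  also have "\<dots> = (\<Sum>t\<in>{..<x div y}. 1)"
    by (rule sum.mono_neutral_cong_right) (use d in auto)
  finally show ?thesis by simp
qed

lemma pr_div [pr_intros]: "pr A \<Longrightarrow> pr B \<Longrightarrow> pr (\<lambda>xs. A xs div B xs)"
proof -
  assume a: "pr A" "pr B"
  have "pr (\<lambda>xs. \<Sum>t<arg 0 xs. (\<lambda>t x y. if Suc t * y \<le> x then 1 else 0) t (arg 0 xs) (arg 1 xs))"
    by (rule pr_sum2[where t="\<lambda>t x y. if Suc t * y \<le> x then 1 else 0"]) (rule pr_intros)+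
  then have "pr (\<lambda>xs. if arg 1 xs \<le> 0 then 0 else \<Sum>t<arg 0 xs. if Suc t * arg 1 xs \<le> arg 0 xs then 1 else 0)"
    by (intro pr_ite_le pr_arg pr_const) simp
  moreover have "(\<lambda>xs. arg 0 xs div arg 1 xs) = (\<lambda>xs. if arg 1 xs \<le> 0 then 0 else \<Sum>t<arg 0 xs. if Suc t * arg 1 xs \<le> arg 0 xs then 1 else 0)"
    using div_as_sum by fastforce
  ultimately have "pr (\<lambda>xs. arg 0 xs div arg 1 xs)" by simp
  from pr_comp2[OF this a] show ?thesis .
qed



lemma pr_ite_even [pr_intros]: "pr A \<Longrightarrow> pr C \<Longrightarrow> pr D \<Longrightarrow>
   pr (\<lambda>xs. if even (A xs) then C xs else D xs)"
proof -
  assume a: "pr A" "pr C" "pr D"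
  have e: "(if even (A xs) then C xs else D xs) =
     (if A xs - 2 * (A xs div 2) \<le> 0 then C xs else D xs)" for xs
    by (auto simp: minus_mod_eq_mult_div[symmetric] even_iff_mod_2_eq_zero)
  show ?thesis unfolding e by (intro pr_intros a)
qed

lemma pr_choose [pr_intros]: "pr A \<Longrightarrow> pr B \<Longrightarrow> pr (\<lambda>xs. A xs choose B xs)"
proof -
  assume a: "pr A" "pr B"
  have e: "(A xs choose B xs) = (if B xs \<le> A xs then fact (A xs) div (fact (B xs) * fact (A xs - B xs)) else 0)" for xs
    using binomial_fact'[of "B xs" "A xs"] by auto
  show ?thesis unfolding e by (intro pr_intros a)
qed

lemma pr_triangle [pr_intros]: "pr A \<Longrightarrow> pr (\<lambda>xs. triangle (A xs))"
  unfolding triangle_def by (intro pr_intros)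

lemma pr_prod_encode [pr_intros]: "pr A \<Longrightarrow> pr B \<Longrightarrow> pr (\<lambda>xs. prod_encode (A xs, B xs))"
  unfolding prod_encode_def by (simp, intro pr_intros)

definition diag :: "nat \<Rightarrow> nat" where
  "diag c = rec_nat 0 (\<lambda>k r. if triangle (Suc r) \<le> Suc k then Suc r else r) c"

lemma diag_bounds: "triangle (diag c) \<le> c \<and> c < triangle (Suc (diag c))"
proof (induction c)
  case 0 then show ?case by (simp add: diag_def)
next
  case (Suc c)
  have d: "diag (Suc c) = (if triangle (Suc (diag c)) \<le> Suc c then Suc (diag c) else diag c)"
    by (simp add: diag_def)
  show ?case using Suc unfolding d by auto
qed

lemma prod_decode_diag: "prod_decode c = (c - triangle (diag c), diag c - (c - triangle (diag c)))"
proof -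
  let ?d = "diag c" let ?a = "c - triangle ?d"
  have "?a \<le> ?d" using diag_bounds[of c] by auto
  then have "prod_encode (?a, ?d - ?a) = c" using diag_bounds[of c]
    by (simp add: prod_encode_def)
  then show ?thesis by (metis prod_encode_inverse)
qed

lemma pr_diag [pr_intros]: "pr A \<Longrightarrow> pr (\<lambda>xs. diag (A xs))"
proof -
  assume a: "pr A"
  have "pr (\<lambda>xs. rec_nat ((\<lambda>p q. 0) (arg 0 xs) (arg 0 xs)) (\<lambda>k r. (\<lambda>k r p q. if triangle (Suc r) \<le> Suc k then Suc r else r) k r (arg 0 xs) (arg 0 xs)) (arg 0 xs))"
    by (rule pr_rec2[where g="\<lambda>p q. 0" and h="\<lambda>k r p q. if triangle (Suc r) \<le> Suc k then Suc r else r"]) (rule pr_intros)+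
  then have "pr (\<lambda>xs. diag (arg 0 xs))" by (simp add: diag_def)
  from pr_comp1[OF this a] show ?thesis .
qed

lemma pr_pd_fst [pr_intros]: "pr A \<Longrightarrow> pr (\<lambda>xs. fst (prod_decode (A xs)))"
  unfolding prod_decode_diag by simp (intro pr_intros)
lemma pr_pd_snd [pr_intros]: "pr A \<Longrightarrow> pr (\<lambda>xs. snd (prod_decode (A xs)))"
  unfolding prod_decode_diag by simp (intro pr_intros)



primrec ar :: "prscheme \<Rightarrow> nat" where
  "ar PZero = 0"
| "ar PSucc = 1"
| "ar (PProj i) = Suc i"
| "ar (PComp f gs) = foldr max (map ar gs) 0"
| "ar (PRec g h) = max (Suc (ar g)) (ar h - 1)"
| "ar POracle = 1"

lemma foldr_max_ge: "x \<in> set xs \<Longrightarrow> x \<le> foldr max xs (0::nat)"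
  by (induction xs) auto

lemma arg_append: "arg i (xs @ ys) = (if i < length xs then xs ! i else arg (i - length xs) ys)"
  by (auto simp: arg_def nth_append)

lemma arg_ge_length: "length xs \<le> i \<Longrightarrow> arg i xs = 0"
  by (simp add: arg_def)

lemma arg_nth: "i < length xs \<Longrightarrow> arg i xs = xs ! i"
  by (simp add: arg_def)

lemma arg_replicate0: "arg i (replicate n 0) = 0"
  by (auto simp: arg_def)

lemma peval_arity:
  "(\<forall>i<n. arg i xs = arg i ys) \<Longrightarrow> ar S \<le> n \<Longrightarrow> peval S \<rho> xs = peval S \<rho> ys"
proof (induction S arbitrary: n xs ys)
  case PZero then show ?case by simp
next
  case PSucc then show ?case by simp
next
  case (PProj i) then show ?case by simp
next
  case POracle then show ?case by simp
next
  case (PComp f gs)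
  have "map (\<lambda>g. peval g \<rho> xs) gs = map (\<lambda>g. peval g \<rho> ys) gs"
  proof (rule map_cong[OF refl])
    fix g assume g: "g \<in> set gs"
    have "ar g \<le> n" using PComp.prems(2) foldr_max_ge[of "ar g" "map ar gs"] g by auto
    then show "peval g \<rho> xs = peval g \<rho> ys" using PComp.IH(2)[OF g] PComp.prems(1) by blast
  qed
  then show ?case by (simp only: peval.simps)
next
  case (PRec g h)
  have n1: "1 \<le> n" using PRec.prems(2) by auto
  have a0: "arg 0 xs = arg 0 ys" using PRec.prems(1) n1 by auto
  have gb: "peval g \<rho> (drop (Suc 0) xs) = peval g \<rho> (drop (Suc 0) ys)"
    by (rule PRec.IH(1)[of "n - 1"]) (use PRec.prems in \<open>auto simp: arg_drop1 arg_drop1'\<close>)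
  have hb: "peval h \<rho> (k # r # drop (Suc 0) xs) = peval h \<rho> (k # r # drop (Suc 0) ys)" for k r
  proof (rule PRec.IH(2)[of "Suc n"])
    show "\<forall>i<Suc n. arg i (k # r # drop (Suc 0) xs) = arg i (k # r # drop (Suc 0) ys)"
    proof (intro allI impI)
      fix i assume "i < Suc n"
      then show "arg i (k # r # drop (Suc 0) xs) = arg i (k # r # drop (Suc 0) ys)"
        using PRec.prems(1) by (cases i; cases "i - 1") (auto simp: arg_drop1 arg_drop1')
    qed
    show "ar h \<le> Suc n" using PRec.prems(2) by auto
  qed
  show ?case by (simp add: a0 gb hb)
qed

primrec tr :: "prscheme \<Rightarrow> prscheme \<Rightarrow> nat \<Rightarrow> prscheme" where
  "tr PZero C pos = PZero"
| "tr PSucc C pos = PSucc"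
| "tr (PProj i) C pos = PProj i"
| "tr (PComp f gs) C pos = PComp (tr f C (max (length gs) (ar f)))
      (map (\<lambda>g. tr g C pos) gs @ replicate (max (length gs) (ar f) - length gs) PZero @ [PProj pos])"
| "tr (PRec g h) C pos = PRec (tr g C (pos - 1)) (tr h C (Suc pos))"
| "tr POracle C pos = PComp C [PProj pos, PProj 0]"

lemma tr_oracle_free: "oracle_free C \<Longrightarrow> oracle_free (tr S C pos)"
  by (induction S arbitrary: pos) (auto simp: list_all_iff)

lemma tr_correct:
  assumes C: "\<And>\<rho>' ys. peval C \<rho>' ys = c (arg 0 ys) (arg 1 ys)"
  shows "ar S \<le> pos \<Longrightarrow> peval (tr S C pos) \<rho>' xs = peval S (c (arg pos xs)) xs"
proof (induction S arbitrary: pos xs)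
  case PZero then show ?case by simp
next
  case PSucc then show ?case by simp
next
  case (PProj i) then show ?case by simp
next
  case POracle then show ?case by (simp add: C)
next
  case (PComp f gs)
  let ?q = "max (length gs) (ar f)"
  let ?p = "arg pos xs"
  let ?L = "map (\<lambda>g. peval g (c ?p) xs) gs"
  let ?L' = "?L @ replicate (?q - length gs) 0 @ [?p]"
  have gs: "peval (tr g C pos) \<rho>' xs = peval g (c ?p) xs" if g: "g \<in> set gs" for g
  proof -
    have "ar g \<le> pos" using PComp.prems foldr_max_ge[of "ar g" "map ar gs"] g by auto
    then show ?thesis using PComp.IH(2)[OF g] by blast
  qed
  have m: "map (\<lambda>x. peval x \<rho>' xs) (map (\<lambda>g. tr g C pos) gs @ replicate (?q - length gs) PZero @ [PProj pos]) = ?L'"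
    using gs by (simp add: map_replicate_const)
  have aq: "arg ?q ?L' = ?p" by (simp add: arg_append)
  have "peval (tr f C ?q) \<rho>' ?L' = peval f (c (arg ?q ?L')) ?L'"
    by (rule PComp.IH(1)) simp
  also have "\<dots> = peval f (c ?p) ?L'" by (simp only: aq)
  also have "\<dots> = peval f (c ?p) ?L"
  proof (rule peval_arity[of ?q])
    show "\<forall>i<?q. arg i ?L' = arg i ?L"
    proof (intro allI impI)
      fix i assume i: "i < ?q"
      show "arg i ?L' = arg i ?L"
      proof (cases "i < length gs")
        case True then show ?thesis by (simp add: arg_append arg_nth)
      next
        case False then have "i - length gs < ?q - length gs" using i by auto
        then show ?thesis using False by (simp add: arg_append arg_ge_length)
      qed
    qed
  qed simp
  finally show ?case unfolding tr.simps peval.simps m .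
next
  case (PRec g h)
  have pos1: "1 \<le> pos" using PRec.prems by auto
  have gb: "peval (tr g C (pos - 1)) \<rho>' (drop 1 xs) = peval g (c (arg pos xs)) (drop 1 xs)"
  proof -
    have "peval (tr g C (pos - 1)) \<rho>' (drop 1 xs) = peval g (c (arg (pos - 1) (drop 1 xs))) (drop 1 xs)"
      by (rule PRec.IH(1)) (use PRec.prems in auto)
    then show ?thesis using pos1 by (simp add: arg_drop1 arg_drop1')
  qed
  have hb: "peval (tr h C (Suc pos)) \<rho>' (k # r # drop 1 xs) = peval h (c (arg pos xs)) (k # r # drop 1 xs)" for k r
  proof -
    have "peval (tr h C (Suc pos)) \<rho>' (k # r # drop 1 xs) = peval h (c (arg (Suc pos) (k # r # drop 1 xs))) (k # r # drop 1 xs)"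
      by (rule PRec.IH(2)) (use PRec.prems in auto)
    then show ?thesis using pos1 by (cases pos) (auto simp: arg_drop1 arg_drop1')
  qed
  show ?case by (simp only: tr.simps peval.simps gb hb)
qed

lemma pr_oracle_subst:
  assumes "pr (\<lambda>xs. c (arg 0 xs) (arg 1 xs))"
  shows "pr (\<lambda>xs. peval \<Phi> (c (arg 1 xs)) [arg 0 xs])"
proof -
  obtain C where C: "oracle_free C" "\<And>\<rho>' ys. peval C \<rho>' ys = c (arg 0 ys) (arg 1 ys)"
    using assms unfolding pr_def by blast
  define pos where "pos = max 1 (ar \<Phi>)"
  define S where "S = PComp (tr \<Phi> C pos) ([PProj 0] @ replicate (pos - 1) PZero @ [PProj 1])"
  have "peval S \<rho> xs = peval \<Phi> (c (arg 1 xs)) [arg 0 xs]" for \<rho> xs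
  proof -
    let ?L = "[arg 0 xs] @ replicate (pos - 1) 0 @ [arg 1 xs]"
    have m: "map (\<lambda>g. peval g \<rho> xs) ([PProj 0] @ replicate (pos - 1) PZero @ [PProj 1]) = ?L"
      by (simp add: map_replicate_const)
    obtain p' where p': "pos = Suc p'" using Suc_le_D[of 0 pos] pos_def by auto
    have ap: "arg pos ?L = arg 1 xs" unfolding p' by (simp add: arg_append)
    have "peval S \<rho> xs = peval (tr \<Phi> C pos) \<rho> ?L" unfolding S_def by (simp only: peval.simps m)
    also have "\<dots> = peval \<Phi> (c (arg pos ?L)) ?L"
      by (rule tr_correct[OF C(2)]) (simp add: pos_def)
    also have "\<dots> = peval \<Phi> (c (arg 1 xs)) ?L" by (simp only: ap)
    also have "\<dots> = peval \<Phi> (c (arg 1 xs)) [arg 0 xs]"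
    proof (rule peval_arity[of pos])
      show "\<forall>i<pos. arg i ?L = arg i [arg 0 xs]"
      proof (intro allI impI)
        fix i assume i: "i < pos"
        show "arg i ?L = arg i [arg 0 xs]"
        proof (cases i)
          case (Suc j) then have "j < p'" using i p' by auto
          then show ?thesis using Suc p' by (simp add: arg_append)
        qed simp
      qed
    qed (simp add: pos_def)
    finally show ?thesis .
  qed
  moreover have "oracle_free S" using tr_oracle_free[OF C(1)] unfolding S_def by (simp add: list_all_iff)
  ultimately show ?thesis unfolding pr_def by blast
qed



definition bnd :: "(nat \<Rightarrow> nat) \<Rightarrow> bool" where
  "bnd \<rho> \<longleftrightarrow> (\<forall>j. \<rho> j \<le> 2 ^ j)"

definition good :: "prscheme \<Rightarrow> (nat \<Rightarrow> nat) \<Rightarrow> bool" where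
  "good S B \<longleftrightarrow> mono B \<and> (\<forall>s. s \<le> B s) \<and>
    (\<forall>\<rho> \<rho>' xs s. bnd \<rho> \<longrightarrow> bnd \<rho>' \<longrightarrow> (\<forall>x\<in>set xs. x \<le> s) \<longrightarrow> (\<forall>j\<le>B s. \<rho> j = \<rho>' j) \<longrightarrow>
      peval S \<rho> xs = peval S \<rho>' xs \<and> peval S \<rho> xs \<le> B s)"

lemma arg_le: "\<forall>x\<in>set xs. x \<le> s \<Longrightarrow> arg i xs \<le> s"
  by (auto simp: arg_def)

lemma set_drop1_le: "\<forall>x\<in>set xs. x \<le> s \<Longrightarrow> \<forall>x\<in>set (drop 1 xs). x \<le> s"
  by (meson in_set_dropD)

lemma sum_list_le_member: "x \<in> set xs \<Longrightarrow> (x::nat) \<le> sum_list xs"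
  by (simp add: member_le_sum_list)

lemma bound_exists: "\<exists>B. pr (\<lambda>xs. B (arg 0 xs)) \<and> good S B"
proof (induction S)
  case PZero
  show ?case by (rule exI[of _ "\<lambda>s. s"]) (auto simp: good_def mono_def intro: pr_arg)
next
  case PSucc
  show ?case by (rule exI[of _ "\<lambda>s. Suc s"]) (auto simp: good_def mono_def arg_le intro: pr_intros)
next
  case (PProj i)
  show ?case by (rule exI[of _ "\<lambda>s. s"]) (auto simp: good_def mono_def arg_le intro: pr_arg)
next
  case POracle
  show ?case
  proof (rule exI[of _ "\<lambda>s. 2 ^ s"], intro conjI)
    show "pr (\<lambda>xs. 2 ^ arg 0 xs)" by (intro pr_intros)
    show "good POracle (\<lambda>s. 2 ^ s)" unfolding good_def
    proof (intro conjI allI impI)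
      show "mono (\<lambda>s. (2::nat) ^ s)" by (simp add: mono_def power_increasing)
      show "s \<le> 2 ^ s" for s :: nat by (simp add: less_imp_le)
      fix \<rho> \<rho>' :: "nat \<Rightarrow> nat" and xs and s :: nat
      assume b: "bnd \<rho>" "bnd \<rho>'" and xs: "\<forall>x\<in>set xs. x \<le> s" and ag: "\<forall>j\<le>2 ^ s. \<rho> j = \<rho>' j"
      have a: "arg 0 xs \<le> s" using arg_le[OF xs] .
      have "arg 0 xs \<le> 2 ^ s" using a by (meson le_trans less_exp less_imp_le)
      then show "peval POracle \<rho> xs = peval POracle \<rho>' xs" using ag by simp
      have "\<rho> (arg 0 xs) \<le> 2 ^ arg 0 xs" using b unfolding bnd_def by auto
      also have "\<dots> \<le> 2 ^ s" using a by (simp add: power_increasing)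
      finally show "peval POracle \<rho> xs \<le> 2 ^ s" by simp
    qed
  qed
next
  case (PComp f gs)
  obtain Bf where Bf: "pr (\<lambda>xs. Bf (arg 0 xs))" "good f Bf" using PComp.IH(1) by blast
  have "\<forall>g\<in>set gs. \<exists>B. pr (\<lambda>xs. B (arg 0 xs)) \<and> good g B" using PComp.IH(2) by blast
  then obtain Bg where Bg: "\<And>g. g \<in> set gs \<Longrightarrow> pr (\<lambda>xs. Bg g (arg 0 xs)) \<and> good g (Bg g)"
    by metis
  define Sg where "Sg s = sum_list (map (\<lambda>g. Bg g s) gs)" for s
  define B where "B s = Bf (s + Sg s)" for s
  have prS: "pr (\<lambda>xs. sum_list (map (\<lambda>g. Bg g (arg 0 xs)) gs'))" if "set gs' \<subseteq> set gs" for gs'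
    using that
  proof (induction gs')
    case Nil then show ?case by (simp add: pr_const)
  next
    case (Cons g gs')
    then have "pr (\<lambda>xs. Bg g (arg 0 xs))" using Bg by auto
    then show ?case using Cons by (simp add: pr_add)
  qed
  have prB: "pr (\<lambda>xs. B (arg 0 xs))" unfolding B_def Sg_def
    by (rule pr_comp1[OF Bf(1)]) (intro pr_add pr_arg prS order_refl)
  have monoS: "mono Sg" unfolding Sg_def mono_def
    using Bg by (auto simp: good_def mono_def intro!: sum_list_mono)
  have Bfm: "mono Bf" "\<And>s. s \<le> Bf s" using Bf(2) by (auto simp: good_def)
  have goodB: "good (PComp f gs) B" unfolding good_def
  proof (intro conjI allI impI)
    show "mono B" unfolding B_def mono_def
      by (intro allI impI monoD[OF Bfm(1)] add_mono monoD[OF monoS]) 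
    show "s \<le> B s" for s unfolding B_def using Bfm(2)[of "s + Sg s"] by auto
    fix \<rho> \<rho>' :: "nat \<Rightarrow> nat" and xs and s :: nat
    assume b: "bnd \<rho>" "bnd \<rho>'" and xs: "\<forall>x\<in>set xs. x \<le> s" and ag: "\<forall>j\<le>B s. \<rho> j = \<rho>' j"
    have gsb: "peval g \<rho> xs = peval g \<rho>' xs \<and> peval g \<rho> xs \<le> s + Sg s" if g: "g \<in> set gs" for g
    proof -
      have gg: "good g (Bg g)" using Bg[OF g] by blast
      have le1: "Bg g s \<le> Sg s" unfolding Sg_def using g by (intro sum_list_le_member) auto
      have "Bg g s \<le> B s" unfolding B_def using le1 Bfm(2)[of "s + Sg s"] by linarith
      then have "\<forall>j\<le>Bg g s. \<rho> j = \<rho>' j" using ag by auto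
      then have "peval g \<rho> xs = peval g \<rho>' xs \<and> peval g \<rho> xs \<le> Bg g s"
        using gg b xs unfolding good_def by blast
      then show ?thesis using le1 by linarith
    qed
    have meq: "map (\<lambda>g. peval g \<rho> xs) gs = map (\<lambda>g. peval g \<rho>' xs) gs" using gsb by auto
    have mle: "\<forall>x\<in>set (map (\<lambda>g. peval g \<rho> xs) gs). x \<le> s + Sg s"
    proof
      fix x assume "x \<in> set (map (\<lambda>g. peval g \<rho> xs) gs)"
      then obtain g where "g \<in> set gs" "x = peval g \<rho> xs" by auto
      then show "x \<le> s + Sg s" using gsb by blast
    qed
    have ag2: "\<forall>j\<le>Bf (s + Sg s). \<rho> j = \<rho>' j" using ag unfolding B_def .
    have "peval f \<rho> (map (\<lambda>g. peval g \<rho> xs) gs) = peval f \<rho>' (map (\<lambda>g. peval g \<rho> xs) gs) \<and>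
          peval f \<rho> (map (\<lambda>g. peval g \<rho> xs) gs) \<le> Bf (s + Sg s)"
      using Bf(2) b mle ag2 unfolding good_def by blast
    then show "peval (PComp f gs) \<rho> xs = peval (PComp f gs) \<rho>' xs"
      "peval (PComp f gs) \<rho> xs \<le> B s"
      using meq unfolding B_def by (simp_all only: peval.simps) simp_all
  qed
  show ?case using prB goodB by blast
next
  case (PRec g h)
  obtain Bg where Bg: "pr (\<lambda>xs. Bg (arg 0 xs))" "good g Bg" using PRec.IH(1) by blast
  obtain Bh where Bh: "pr (\<lambda>xs. Bh (arg 0 xs))" "good h Bh" using PRec.IH(2) by blast
  have Bgm: "mono Bg" "\<And>s. s \<le> Bg s" using Bg(2) by (auto simp: good_def)
  have Bhm: "mono Bh" "\<And>s. s \<le> Bh s" using Bh(2) by (auto simp: good_def)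
  define R where "R s k = rec_nat (Bg s) (\<lambda>k r. Bh (s + r)) k" for s k
  have R0: "R s 0 = Bg s" for s by (simp add: R_def)
  have RS: "R s (Suc k) = Bh (s + R s k)" for s k by (simp add: R_def)
  have Rinc: "R s k \<le> R s (Suc k)" for s k
    unfolding RS using Bhm(2)[of "s + R s k"] by linarith
  have Rmk: "k \<le> k' \<Longrightarrow> R s k \<le> R s k'" for s k k'
    using lift_Suc_mono_le[of "R s", OF Rinc] by blast
  have Rms: "s \<le> s' \<Longrightarrow> R s k \<le> R s' k" for s s' k
  proof (induction k)
    case 0 then show ?case by (simp add: R0 monoD[OF Bgm(1)])
  next
    case (Suc k) then show ?case by (simp add: RS monoD[OF Bhm(1)])
  qed
  have Rge: "1 \<le> s \<Longrightarrow> k \<le> R s k" for s k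
  proof (induction k)
    case (Suc k) then show ?case using Bhm(2)[of "s + R s k"] by (simp add: RS)
  qed simp
  define B where "B s = R s s" for s
  have prB: "pr (\<lambda>xs. B (arg 0 xs))"
  proof -
    have "pr (\<lambda>xs. rec_nat ((\<lambda>p q. Bg p) (arg 0 xs) (arg 0 xs)) (\<lambda>k r. (\<lambda>k r p q. Bh (p + r)) k r (arg 0 xs) (arg 0 xs)) (arg 0 xs))"
      apply (rule pr_rec2[where g="\<lambda>p q. Bg p" and h="\<lambda>k r p q. Bh (p + r)"])
          apply (rule Bg(1))
         apply (rule pr_comp1[OF Bh(1)]) apply (intro pr_intros)
      by (rule pr_arg)+
    then show ?thesis by (simp add: B_def R_def)
  qed
  have goodB: "good (PRec g h) B" unfolding good_def
  proof (intro conjI allI impI)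
    show "mono B" unfolding B_def mono_def
      by (meson Rmk Rms le_trans)
    show "s \<le> B s" for s unfolding B_def using Rge[of s s] by (cases s) auto
    fix \<rho> \<rho>' :: "nat \<Rightarrow> nat" and xs and s :: nat
    assume b: "bnd \<rho>" "bnd \<rho>'" and xs: "\<forall>x\<in>set xs. x \<le> s" and ag: "\<forall>j\<le>B s. \<rho> j = \<rho>' j"
    define n0 where "n0 = arg 0 xs"
    have n0s: "n0 \<le> s" unfolding n0_def using arg_le[OF xs] .
    define v where "v \<psi> k = rec_nat (peval g \<psi> (drop 1 xs)) (\<lambda>n r. peval h \<psi> (n # r # drop 1 xs)) k" for \<psi> k
    have xs1: "\<forall>x\<in>set (drop 1 xs). x \<le> s" using set_drop1_le[OF xs] .
    have claim: "k \<le> n0 \<Longrightarrow> v \<rho> k = v \<rho>' k \<and> v \<rho> k \<le> R s k" for k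
    proof (induction k)
      case 0
      have "\<forall>j\<le>Bg s. \<rho> j = \<rho>' j" using ag Rmk[of 0 s s] unfolding B_def R0 by auto
      then have "peval g \<rho> (drop 1 xs) = peval g \<rho>' (drop 1 xs) \<and> peval g \<rho> (drop 1 xs) \<le> Bg s"
        using Bg(2) b xs1 unfolding good_def by blast
      then show ?case by (simp add: v_def R0)
    next
      case (Suc k)
      then have IH: "v \<rho> k = v \<rho>' k" "v \<rho> k \<le> R s k" by auto
      have ks: "k \<le> s" using Suc.prems n0s by auto
      have lst: "\<forall>x\<in>set (k # v \<rho> k # drop 1 xs). x \<le> s + R s k" using ks IH(2) xs1 by auto
      have "Bh (s + R s k) \<le> B s" unfolding B_def RS[symmetric] using Rmk Suc.prems n0s
        by (meson le_trans)
      then have "\<forall>j\<le>Bh (s + R s k). \<rho> j = \<rho>' j" using ag by auto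
      then have "peval h \<rho> (k # v \<rho> k # drop 1 xs) = peval h \<rho>' (k # v \<rho> k # drop 1 xs) \<and>
          peval h \<rho> (k # v \<rho> k # drop 1 xs) \<le> Bh (s + R s k)"
        using Bh(2) b lst unfolding good_def by blast
      moreover have "v \<psi> (Suc k) = peval h \<psi> (k # v \<psi> k # drop 1 xs)" for \<psi>
        by (simp add: v_def)
      ultimately show ?case using IH(1) by (simp add: RS)
    qed
    have pe: "peval (PRec g h) \<psi> xs = v \<psi> n0" for \<psi>
      by (simp only: peval.simps v_def n0_def)
    show "peval (PRec g h) \<rho> xs = peval (PRec g h) \<rho>' xs"
      using claim[of n0] pe by simp
    have "R s n0 \<le> B s" unfolding B_def using Rmk n0s by blast
    then show "peval (PRec g h) \<rho> xs \<le> B s"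
      using claim[of n0] pe by simp
  qed
  show ?case using prB goodB by blast
qed



lemma of_rat_abs': "real_of_rat \<bar>q\<bar> = \<bar>real_of_rat q\<bar>"
  by (simp add: abs_if of_rat_minus)

lemma rat_lt_real: "\<bar>a - b\<bar> < 1 / 2 ^ i \<longleftrightarrow> \<bar>real_of_rat a - real_of_rat b\<bar> < 1 / 2 ^ i"
proof -
  have e1: "real_of_rat \<bar>a - b\<bar> = \<bar>real_of_rat a - real_of_rat b\<bar>" by (simp add: of_rat_abs' of_rat_diff)
  have e2: "real_of_rat (1 / 2 ^ i) = 1 / 2 ^ i" by (simp add: of_rat_divide of_rat_power)
  show ?thesis using of_rat_less[of "\<bar>a - b\<bar>" "1 / 2 ^ i", where 'a=real] unfolding e1 e2 by simp
qed

lemma fast_cauchy_real: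
  "fast_cauchy r \<longleftrightarrow> (\<forall>i. \<bar>real_of_rat (r i) - real_of_rat (r (Suc i))\<bar> < 1 / 2 ^ i)"
  unfolding fast_cauchy_def using rat_lt_real by blast

lemma of_rat_dyadic: "real_of_rat (of_nat c / 2 ^ i) = real c / 2 ^ i"
  by (simp add: of_rat_divide of_rat_power)

lemma name_of_side:
  fixes \<rho> :: "nat \<Rightarrow> nat" and x :: real
  assumes b: "\<And>j. \<rho> j \<le> 2 ^ j"
    and side: "(\<forall>j. x - 1 / 2 ^ j < real (\<rho> j) / 2 ^ j \<and> real (\<rho> j) / 2 ^ j \<le> x) \<or>
               (\<forall>j. x \<le> real (\<rho> j) / 2 ^ j \<and> real (\<rho> j) / 2 ^ j < x + 1 / 2 ^ j)"
  shows "is_name \<rho> x"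
proof -
  define t where "t j = real (\<rho> j) / 2 ^ j" for j
  have hs: "(1::real) / 2 ^ Suc j \<le> 1 / 2 ^ j" for j by (simp add: field_simps)
  have side': "(\<forall>j. x - 1/2^j < t j \<and> t j \<le> x) \<or> (\<forall>j. x \<le> t j \<and> t j < x + 1/2^j)"
    using side by (simp add: t_def)
  have fc: "\<bar>t j - t (Suc j)\<bar> < 1 / 2 ^ j" for j
    using side'
  proof
    assume s: "\<forall>j. x - 1/2^j < t j \<and> t j \<le> x"
    then have "x - 1/2^j < t j" "t j \<le> x" "x - 1/2^Suc j < t (Suc j)" "t (Suc j) \<le> x" by blast+
    then show ?thesis unfolding abs_less_iff using hs[of j] by linarith
  next
    assume s: "\<forall>j. x \<le> t j \<and> t j < x + 1/2^j"
    then have "x \<le> t j" "t j < x + 1/2^j" "x \<le> t (Suc j)" "t (Suc j) < x + 1/2^Suc j" by blast+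
    then show ?thesis unfolding abs_less_iff using hs[of j] by linarith
  qed
  have cl: "\<bar>t j - x\<bar> \<le> (1/2) ^ j" for j
    using side'
  proof
    assume s: "\<forall>j. x - 1/2^j < t j \<and> t j \<le> x"
    then have "x - 1/2^j < t j" "t j \<le> x" by blast+
    then show ?thesis unfolding abs_le_iff power_one_over by linarith
  next
    assume s: "\<forall>j. x \<le> t j \<and> t j < x + 1/2^j"
    then have "x \<le> t j" "t j < x + 1/2^j" by blast+
    then show ?thesis unfolding abs_le_iff power_one_over by linarith
  qed
  have "(\<lambda>j. t j - x) \<longlonglongrightarrow> 0"
  proof (rule Lim_null_comparison[where g="\<lambda>j. (1/2::real) ^ j"])
    show "\<forall>\<^sub>F j in sequentially. norm (t j - x) \<le> (1 / 2) ^ j" using cl by (simp add: always_eventually)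
    show "(\<lambda>j. (1/2::real) ^ j) \<longlonglongrightarrow> 0" by (rule LIMSEQ_power_zero) simp
  qed
  then have lim: "t \<longlonglongrightarrow> x" using LIM_zero_iff by blast
  show ?thesis unfolding is_name_def
  proof (intro conjI allI)
    show "\<rho> i \<le> 2 ^ i" for i by (rule b)
    show "fast_cauchy (\<lambda>i. of_nat (\<rho> i) / 2 ^ i)"
      unfolding fast_cauchy_real of_rat_dyadic using fc unfolding t_def by blast
    show "(\<lambda>i. real (\<rho> i) / 2 ^ i) \<longlonglongrightarrow> x" using lim unfolding t_def .
  qed
qed

definition fln :: "real \<Rightarrow> nat \<Rightarrow> nat" where "fln x j = nat \<lfloor>x * 2 ^ j\<rfloor>"
definition cln :: "real \<Rightarrow> nat \<Rightarrow> nat" where "cln x j = nat \<lceil>x * 2 ^ j\<rceil>"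

lemma fln_bnd: "x \<in> {0..1} \<Longrightarrow> fln x j \<le> 2 ^ j"
proof -
  assume x: "x \<in> {0..1}"
  have "x * 2 ^ j \<le> 2 ^ j" using x by auto
  then have "\<lfloor>x * 2 ^ j\<rfloor> \<le> \<lfloor>(2::real) ^ j\<rfloor>" by (rule floor_mono)
  moreover have "(2::real) ^ j = real_of_int (2 ^ j)" by simp
  ultimately have "\<lfloor>x * 2 ^ j\<rfloor> \<le> 2 ^ j" by (metis floor_of_int)
  then show ?thesis unfolding fln_def by (simp add: nat_le_iff)
qed

lemma cln_bnd: "x \<in> {0..1} \<Longrightarrow> cln x j \<le> 2 ^ j"
proof -
  assume x: "x \<in> {0..1}"
  have "x * 2 ^ j \<le> 2 ^ j" using x by auto
  then have "\<lceil>x * 2 ^ j\<rceil> \<le> 2 ^ j" by (simp add: ceiling_le_iff)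
  then show ?thesis unfolding cln_def by (simp add: nat_le_iff)
qed

lemma fln_name: "x \<in> {0..1} \<Longrightarrow> is_name (fln x) x"
proof (rule name_of_side)
  assume x: "x \<in> {0..1}"
  show "fln x j \<le> 2 ^ j" for j using fln_bnd[OF x] .
  have "x - 1 / 2 ^ j < real (fln x j) / 2 ^ j \<and> real (fln x j) / 2 ^ j \<le> x" for j
  proof -
    have nn: "0 \<le> \<lfloor>x * 2 ^ j\<rfloor>" using x by auto
    have r: "real (fln x j) = of_int \<lfloor>x * 2 ^ j\<rfloor>" unfolding fln_def using nn by simp
    have "x * 2 ^ j - 1 < of_int \<lfloor>x * 2 ^ j\<rfloor>" "of_int \<lfloor>x * 2 ^ j\<rfloor> \<le> x * 2 ^ j" by linarith+
    moreover have p: "(0::real) < 2 ^ j" by simp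
    moreover have e1: "(x - 1 / 2 ^ j) * 2 ^ j = x * 2 ^ j - 1" using p by (simp add: field_simps)
    ultimately show ?thesis unfolding r pos_less_divide_eq[OF p] pos_divide_le_eq[OF p] e1 by linarith
  qed
  then show "(\<forall>j. x - 1 / 2 ^ j < real (fln x j) / 2 ^ j \<and> real (fln x j) / 2 ^ j \<le> x) \<or>
    (\<forall>j. x \<le> real (fln x j) / 2 ^ j \<and> real (fln x j) / 2 ^ j < x + 1 / 2 ^ j)" by blast
qed

lemma cln_name: "x \<in> {0..1} \<Longrightarrow> is_name (cln x) x"
proof (rule name_of_side)
  assume x: "x \<in> {0..1}"
  show "cln x j \<le> 2 ^ j" for j using cln_bnd[OF x] .
  have "x \<le> real (cln x j) / 2 ^ j \<and> real (cln x j) / 2 ^ j < x + 1 / 2 ^ j" for j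
  proof -
    have "0 \<le> x * 2 ^ j" using x by simp
    then have nn: "0 \<le> \<lceil>x * 2 ^ j\<rceil>" by (simp add: zero_le_ceiling)
    have r: "real (cln x j) = of_int \<lceil>x * 2 ^ j\<rceil>" unfolding cln_def using nn by simp
    have "x * 2 ^ j \<le> of_int \<lceil>x * 2 ^ j\<rceil>" "of_int \<lceil>x * 2 ^ j\<rceil> < x * 2 ^ j + 1" by linarith+
    moreover have p: "(0::real) < 2 ^ j" by simp
    moreover have e1: "(x + 1 / 2 ^ j) * 2 ^ j = x * 2 ^ j + 1" using p by (simp add: field_simps)
    ultimately show ?thesis unfolding r pos_le_divide_eq[OF p] pos_divide_less_eq[OF p] e1 by linarith
  qed
  then show "(\<forall>j. x - 1 / 2 ^ j < real (cln x j) / 2 ^ j \<and> real (cln x j) / 2 ^ j \<le> x) \<or>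
    (\<forall>j. x \<le> real (cln x j) / 2 ^ j \<and> real (cln x j) / 2 ^ j < x + 1 / 2 ^ j)" by blast
qed

lemma floor_agree:
  fixes a b :: real
  assumes "\<lfloor>a * 2 ^ M\<rfloor> = \<lfloor>b * 2 ^ M\<rfloor>" "j \<le> M"
  shows "\<lfloor>a * 2 ^ j\<rfloor> = \<lfloor>(b::real) * 2 ^ j\<rfloor>"
proof -
  have e: "y * 2 ^ j = (y * 2 ^ M) / real_of_int (2 ^ (M - j))" for y :: real
  proof -
    have "(2::real) ^ M = 2 ^ j * 2 ^ (M - j)" using assms(2) by (simp add: power_add[symmetric])
    moreover have "real_of_int (2 ^ (M - j)) = (2::real) ^ (M - j)" by simp
    ultimately show ?thesis by simp
  qed
  have f: "\<lfloor>y * 2 ^ j\<rfloor> = \<lfloor>y * 2 ^ M\<rfloor> div 2 ^ (M - j)" for y :: real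
    by (subst e) (rule floor_divide_real_eq_div; simp)
  show ?thesis unfolding f[of a] f[of b] assms(1) ..
qed

lemma ceiling_agree:
  fixes a b :: real
  assumes "\<lceil>a * 2 ^ M\<rceil> = \<lceil>b * 2 ^ M\<rceil>" "j \<le> M"
  shows "\<lceil>a * 2 ^ j\<rceil> = \<lceil>(b::real) * 2 ^ j\<rceil>"
proof -
  have "\<lfloor>(-a) * 2 ^ M\<rfloor> = \<lfloor>(-b) * 2 ^ M\<rfloor>" using assms(1) by (simp add: ceiling_def)
  then have "\<lfloor>(-a) * 2 ^ j\<rfloor> = \<lfloor>(-b) * 2 ^ j\<rfloor>" using floor_agree assms(2) by blast
  then show ?thesis by (simp add: ceiling_def)
qed

lemma fast_cauchy_err:
  assumes fc: "fast_cauchy r" and lim: "(\<lambda>n. real_of_rat (r n)) \<longlonglongrightarrow> L"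
  shows "\<bar>real_of_rat (r n) - L\<bar> \<le> 2 / 2 ^ n"
proof -
  let ?q = "\<lambda>n. real_of_rat (r n)"
  have st: "\<bar>?q i - ?q (Suc i)\<bar> < 1 / 2 ^ i" for i using fc unfolding fast_cauchy_real by blast
  have k: "\<bar>?q n - ?q (n + k)\<bar> \<le> 2 / 2 ^ n - 2 / 2 ^ (n + k)" for k
  proof (induction k)
    case (Suc k)
    have "\<bar>?q n - ?q (n + Suc k)\<bar> \<le> \<bar>?q n - ?q (n + k)\<bar> + \<bar>?q (n + k) - ?q (Suc (n + k))\<bar>" by simp
    also have "\<dots> \<le> 2 / 2 ^ n - 2 / 2 ^ (n + k) + 1 / 2 ^ (n + k)" using Suc st[of "n + k"] by linarith
    also have "\<dots> = 2 / 2 ^ n - 2 / 2 ^ (n + Suc k)" by (simp add: field_simps)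
    finally show ?case .
  qed simp
  have lim2: "(\<lambda>k. \<bar>?q n - ?q (n + k)\<bar>) \<longlonglongrightarrow> \<bar>?q n - L\<bar>"
    by (intro tendsto_intros) (use LIMSEQ_ignore_initial_segment[OF lim, of n] in \<open>simp add: add.commute\<close>)
  show ?thesis
  proof (rule LIMSEQ_le_const2[OF lim2])
    show "\<exists>N. \<forall>k\<ge>N. \<bar>?q n - ?q (n + k)\<bar> \<le> 2 / 2 ^ n"
    proof (intro exI[of _ 0] allI impI)
      fix k :: nat
      have "(0::real) \<le> 2 / 2 ^ (n + k)" by simp
      then show "\<bar>?q n - ?q (n + k)\<bar> \<le> 2 / 2 ^ n" using k[of k] by linarith
    qed
  qed
qed



lemma step_lemma:
  fixes f :: "real \<Rightarrow> real" and V :: "(nat \<Rightarrow> nat) \<Rightarrow> real"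
  assumes approx: "\<And>x \<psi>. x \<in> {0..1} \<Longrightarrow> is_name \<psi> x \<Longrightarrow> \<bar>V \<psi> - f x\<bar> \<le> e"
    and use: "\<And>\<psi> \<psi>'. bnd \<psi> \<Longrightarrow> bnd \<psi>' \<Longrightarrow> (\<forall>j\<le>M. \<psi> j = \<psi>' j) \<Longrightarrow> V \<psi> = V \<psi>'"
    and a: "a \<in> {0..1}" and b: "b \<in> {0..1}"
    and fl: "\<lfloor>a * 2 ^ M\<rfloor> = \<lfloor>b * 2 ^ M\<rfloor> \<or> \<lceil>a * 2 ^ M\<rceil> = \<lceil>b * 2 ^ M\<rceil>"
  shows "\<bar>f a - f b\<bar> \<le> 2 * e"
proof -
  obtain \<psi> \<psi>' where n: "is_name \<psi> a" "is_name \<psi>' b" "bnd \<psi>" "bnd \<psi>'" "\<forall>j\<le>M. \<psi> j = \<psi>' j"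
  proof (cases "\<lfloor>a * 2 ^ M\<rfloor> = \<lfloor>b * 2 ^ M\<rfloor>")
    case True
    show ?thesis
    proof (rule that[of "fln a" "fln b"])
      show "is_name (fln a) a" "is_name (fln b) b" using fln_name a b by auto
      show "bnd (fln a)" "bnd (fln b)" using fln_bnd a b unfolding bnd_def by auto
      show "\<forall>j\<le>M. fln a j = fln b j" using floor_agree[OF True] unfolding fln_def by auto
    qed
  next
    case False
    then have C: "\<lceil>a * 2 ^ M\<rceil> = \<lceil>b * 2 ^ M\<rceil>" using fl by blast
    show ?thesis
    proof (rule that[of "cln a" "cln b"])
      show "is_name (cln a) a" "is_name (cln b) b" using cln_name a b by auto
      show "bnd (cln a)" "bnd (cln b)" using cln_bnd a b unfolding bnd_def by auto
      show "\<forall>j\<le>M. cln a j = cln b j" using ceiling_agree[OF C] unfolding cln_def by auto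
    qed
  qed
  then have v: "V \<psi> = V \<psi>'" using use by blast
  have "\<bar>V \<psi> - f a\<bar> \<le> e" "\<bar>V \<psi>' - f b\<bar> \<le> e" using approx a b n by auto
  then show ?thesis using v by (auto simp: abs_le_iff)
qed

lemma modulus_lemma:
  fixes f :: "real \<Rightarrow> real" and V :: "(nat \<Rightarrow> nat) \<Rightarrow> real"
  assumes approx: "\<And>x \<psi>. x \<in> {0..1} \<Longrightarrow> is_name \<psi> x \<Longrightarrow> \<bar>V \<psi> - f x\<bar> \<le> e"
    and use: "\<And>\<psi> \<psi>'. bnd \<psi> \<Longrightarrow> bnd \<psi>' \<Longrightarrow> (\<forall>j\<le>M. \<psi> j = \<psi>' j) \<Longrightarrow> V \<psi> = V \<psi>'"
    and e0: "0 \<le> e"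
  shows "a \<in> {0..1} \<Longrightarrow> b \<in> {0..1} \<Longrightarrow> \<bar>a - b\<bar> \<le> 1 / 2 ^ M \<Longrightarrow> \<bar>f a - f b\<bar> \<le> 4 * e"
proof -
  have step: "\<bar>f a - f b\<bar> \<le> 2 * e" if "a \<in> {0..1}" "b \<in> {0..1}"
     "\<lfloor>a * 2 ^ M\<rfloor> = \<lfloor>b * 2 ^ M\<rfloor> \<or> \<lceil>a * 2 ^ M\<rceil> = \<lceil>b * 2 ^ M\<rceil>" for a b
    by (rule step_lemma[where f=f and V=V and e=e and M=M, OF approx use that])
  have main: "\<bar>f a - f b\<bar> \<le> 4 * e" if a: "a \<in> {0..1}" and b: "b \<in> {0..1}" and ab: "a \<le> b"
    and d: "b - a \<le> 1 / 2 ^ M" for a b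
  proof -
    define A where "A = a * 2 ^ M"
    define B where "B = b * 2 ^ M"
    have p: "(0::real) < 2 ^ M" by simp
    have BA: "B - A \<le> 1" "A \<le> B" "0 \<le> A"
      using d ab a p unfolding A_def B_def by (auto simp: field_simps)
    show ?thesis
    proof (cases "\<lfloor>A\<rfloor> = \<lfloor>B\<rfloor> \<or> \<lceil>A\<rceil> = \<lceil>B\<rceil>")
      case True then show ?thesis using step[OF a b] e0 unfolding A_def B_def by fastforce
    next
      case False
      have fB: "\<lfloor>B\<rfloor> = \<lfloor>A\<rfloor> + 1"
      proof -
        have "\<lfloor>A\<rfloor> \<le> \<lfloor>B\<rfloor>" using BA by (simp add: floor_mono)
        moreover have "\<lfloor>B\<rfloor> \<le> \<lfloor>A + 1\<rfloor>" using BA by (intro floor_mono) simp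
        ultimately show ?thesis using False by simp
      qed
      obtain c :: real where c: "c \<in> {0..1}"
        "\<lfloor>a * 2 ^ M\<rfloor> = \<lfloor>c * 2 ^ M\<rfloor> \<or> \<lceil>a * 2 ^ M\<rceil> = \<lceil>c * 2 ^ M\<rceil>"
        "\<lfloor>c * 2 ^ M\<rfloor> = \<lfloor>b * 2 ^ M\<rfloor> \<or> \<lceil>c * 2 ^ M\<rceil> = \<lceil>b * 2 ^ M\<rceil>"
      proof (cases "\<lceil>A\<rceil> = \<lfloor>A\<rfloor> + 1")
        case True
        define c where "c = real_of_int (\<lfloor>A\<rfloor> + 1) / 2 ^ M"
        have cM: "c * 2 ^ M = real_of_int (\<lfloor>A\<rfloor> + 1)" unfolding c_def using p by simp
        have "real_of_int \<lfloor>B\<rfloor> \<le> B" by simp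
        then have "c * 2 ^ M \<le> b * 2 ^ M" using cM fB unfolding B_def by simp
        then have cb: "c \<le> b" using p by simp
        have "0 \<le> \<lfloor>A\<rfloor>" using BA by simp
        then have "0 \<le> c" unfolding c_def by simp
        show ?thesis
        proof (rule that[of c])
          show "c \<in> {0..1}" using cb b \<open>0 \<le> c\<close> by auto
          show "\<lfloor>a * 2 ^ M\<rfloor> = \<lfloor>c * 2 ^ M\<rfloor> \<or> \<lceil>a * 2 ^ M\<rceil> = \<lceil>c * 2 ^ M\<rceil>"
            using True unfolding cM A_def[symmetric] by (simp only: ceiling_of_int) simp
          show "\<lfloor>c * 2 ^ M\<rfloor> = \<lfloor>b * 2 ^ M\<rfloor> \<or> \<lceil>c * 2 ^ M\<rceil> = \<lceil>b * 2 ^ M\<rceil>"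
            using fB unfolding cM B_def[symmetric] by (simp only: floor_of_int) simp
        qed
      next
        case False2: False
        have Aint: "A = real_of_int \<lfloor>A\<rfloor>" using False2 ceiling_altdef[of A] by (auto split: if_splits)
        have "real_of_int \<lfloor>B\<rfloor> \<le> B" by simp
        then have Bv: "B = A + 1" using fB BA Aint by simp
        define c where "c = (real_of_int \<lfloor>A\<rfloor> + 1/2) / 2 ^ M"
        have cM: "c * 2 ^ M = real_of_int \<lfloor>A\<rfloor> + 1/2" unfolding c_def using p by simp
        have "c * 2 ^ M \<le> b * 2 ^ M" using cM Bv Aint unfolding B_def by linarith
        then have cb: "c \<le> b" using p by simp
        have "0 \<le> \<lfloor>A\<rfloor>" using BA by simp
        then have "0 \<le> c" unfolding c_def by simp
        have fc: "\<lfloor>c * 2 ^ M\<rfloor> = \<lfloor>A\<rfloor>" unfolding cM by (simp add: floor_eq_iff)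
        have cc: "\<lceil>c * 2 ^ M\<rceil> = \<lfloor>A\<rfloor> + 1" unfolding cM by (simp add: ceiling_eq_iff)
        have cB: "\<lceil>B\<rceil> = \<lfloor>A\<rfloor> + 1" using Bv Aint by (metis ceiling_of_int of_int_1 of_int_add)
        show ?thesis
        proof (rule that[of c])
          show "c \<in> {0..1}" using cb b \<open>0 \<le> c\<close> by auto
          show "\<lfloor>a * 2 ^ M\<rfloor> = \<lfloor>c * 2 ^ M\<rfloor> \<or> \<lceil>a * 2 ^ M\<rceil> = \<lceil>c * 2 ^ M\<rceil>"
            using fc unfolding A_def by simp
          show "\<lfloor>c * 2 ^ M\<rfloor> = \<lfloor>b * 2 ^ M\<rfloor> \<or> \<lceil>c * 2 ^ M\<rceil> = \<lceil>b * 2 ^ M\<rceil>"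
            using cc cB unfolding B_def by simp
        qed
      qed
      have "\<bar>f a - f c\<bar> \<le> 2 * e" by (rule step[OF a c(1) c(2)])
      moreover have "\<bar>f c - f b\<bar> \<le> 2 * e" by (rule step[OF c(1) b c(3)])
      ultimately show ?thesis by (auto simp: abs_le_iff)
    qed
  qed
  assume a: "a \<in> {0..1}" and b: "b \<in> {0..1}" and d: "\<bar>a - b\<bar> \<le> 1 / 2 ^ M"
  show "\<bar>f a - f b\<bar> \<le> 4 * e"
  proof (cases "a \<le> b")
    case True then show ?thesis using main[OF a b] d by auto
  next
    case False then show ?thesis using main[OF b a] d by (auto simp: abs_minus_commute)
  qed
qed

lemma chain_lemma:
  fixes f :: "real \<Rightarrow> real"
  assumes md: "\<And>a b. a \<in> {0..1} \<Longrightarrow> b \<in> {0..1} \<Longrightarrow> \<bar>a - b\<bar> \<le> \<delta> \<Longrightarrow> \<bar>f a - f b\<bar> \<le> E"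
    and d0: "0 < \<delta>" and E0: "0 \<le> E"
  shows "a \<in> {0..1} \<Longrightarrow> b \<in> {0..1} \<Longrightarrow> \<bar>a - b\<bar> \<le> real (Suc L) * \<delta> \<Longrightarrow> \<bar>f a - f b\<bar> \<le> real (Suc L) * E"
proof (induction L arbitrary: a)
  case 0 then show ?case using md by simp
next
  case (Suc L)
  show ?case
  proof (cases "\<bar>a - b\<bar> \<le> real (Suc L) * \<delta>")
    case True
    then have "\<bar>f a - f b\<bar> \<le> real (Suc L) * E" using Suc by blast
    also have "\<dots> \<le> real (Suc (Suc L)) * E" using E0 by (intro mult_right_mono) auto
    finally show ?thesis .
  next
    case False
    define c where "c = (if a \<le> b then a + \<delta> else a - \<delta>)"
    have "\<delta> \<le> real (Suc L) * \<delta>" using d0 by simp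
    then have far: "\<delta> < \<bar>a - b\<bar>" using False by linarith
    have c01: "c \<in> {0..1}" using Suc.prems far d0 unfolding c_def by (auto split: if_splits)
    have ac: "\<bar>a - c\<bar> \<le> \<delta>" unfolding c_def using d0 by auto
    have cb: "\<bar>c - b\<bar> \<le> real (Suc L) * \<delta>" using Suc.prems(3) far unfolding c_def
      by (auto split: if_splits simp: algebra_simps)
    have "\<bar>f a - f c\<bar> \<le> E" using md Suc.prems(1) c01 ac by blast
    moreover have "\<bar>f c - f b\<bar> \<le> real (Suc L) * E" using Suc.IH[OF c01 Suc.prems(2) cb] .
    ultimately have "\<bar>f a - f b\<bar> \<le> E + real (Suc L) * E" by (auto simp: abs_le_iff)
    then show ?thesis by (simp add: algebra_simps)
  qed
qed

lemma quad_modulus: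
  fixes f :: "real \<Rightarrow> real"
  assumes md: "\<And>a b. a \<in> {0..1} \<Longrightarrow> b \<in> {0..1} \<Longrightarrow> \<bar>a - b\<bar> \<le> \<delta> \<Longrightarrow> \<bar>f a - f b\<bar> \<le> E"
    and d0: "0 < \<delta>" and E0: "0 \<le> E" and a: "a \<in> {0..1}" and b: "b \<in> {0..1}"
  shows "\<bar>f a - f b\<bar> \<le> E * (1 + (a - b)^2 / \<delta>^2)"
proof -
  define t where "t = \<bar>a - b\<bar> / \<delta>"
  have t0: "0 \<le> t" unfolding t_def using d0 by simp
  have t2: "t^2 = (a - b)^2 / \<delta>^2" unfolding t_def by (simp add: power_divide)
  show ?thesis
  proof (cases "t \<le> 1")
    case True
    then have "\<bar>a - b\<bar> \<le> \<delta>" unfolding t_def using d0 by (simp add: divide_le_eq)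
    then have "\<bar>f a - f b\<bar> \<le> E" using md a b by blast
    also have "\<dots> \<le> E * (1 + (a - b)^2 / \<delta>^2)" using E0 by (simp add: mult_le_cancel_left1)
    finally show ?thesis .
  next
    case False
    define L where "L = nat \<lceil>t\<rceil> - 1"
    have c1: "1 \<le> \<lceil>t\<rceil>" using False by linarith
    have SL: "real (Suc L) = real_of_int \<lceil>t\<rceil>" unfolding L_def using c1 by (simp add: of_nat_diff)
    have "\<bar>a - b\<bar> = t * \<delta>" unfolding t_def using d0 by simp
    also have "\<dots> \<le> real (Suc L) * \<delta>" unfolding SL using d0 by (intro mult_right_mono) auto
    finally have ab: "\<bar>a - b\<bar> \<le> real (Suc L) * \<delta>" .
    have "\<bar>f a - f b\<bar> \<le> real (Suc L) * E"
      using chain_lemma[where f=f and \<delta>=\<delta> and E=E and L=L, OF md d0 E0 a b ab] .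
    also have "\<dots> \<le> (1 + t^2) * E"
    proof (rule mult_right_mono[OF _ E0])
      have "real_of_int \<lceil>t\<rceil> < t + 1" by linarith
      moreover have "t \<le> t^2" using False by (simp add: power2_eq_square)
      ultimately show "real (Suc L) \<le> 1 + t^2" unfolding SL by linarith
    qed
    finally show ?thesis unfolding t2 by (simp add: mult.commute)
  qed
qed

lemma bv_term: "n \<noteq> 0 \<Longrightarrow> (k / n - x)^2 * B = (1 / n^2) * (k * (k - 1) * B) +
      (1 / n^2 - 2 * x / n) * (k * B) + x^2 * (B::real)"
  by (simp add: field_simps power2_eq_square)

lemma bern_var:
  assumes N: "1 \<le> N"
  shows "(\<Sum>k\<le>N. (real k / real N - x)^2 * Bernstein N k x) = x * (1 - x) / real N"
proof -
  have Nr: "real N \<noteq> 0" using N by simp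
  have "(\<Sum>k\<le>N. (real k / real N - x)^2 * Bernstein N k x) =
    (\<Sum>k\<le>N. (1 / real N^2) * (real k * (real k - 1) * Bernstein N k x) +
      (1 / real N^2 - 2 * x / real N) * (real k * Bernstein N k x) + x^2 * Bernstein N k x)"
    by (rule sum.cong[OF refl]) (rule bv_term[OF Nr])
  also have "\<dots> = (1 / real N^2) * (\<Sum>k\<le>N. real k * (real k - 1) * Bernstein N k x) +
      (1 / real N^2 - 2 * x / real N) * (\<Sum>k\<le>N. real k * Bernstein N k x) + x^2 * (\<Sum>k\<le>N. Bernstein N k x)"
    by (simp only: sum.distrib sum_distrib_left)
  also have "\<dots> = x * (1 - x) / real N"
    unfolding sum_kk_Bernstein sum_k_Bernstein sum_Bernstein using N by (simp add: Nr field_simps power2_eq_square)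
  finally show ?thesis .
qed

lemma bern_approx:
  fixes f :: "real \<Rightarrow> real"
  assumes mq: "\<And>a b. a \<in> {0..1} \<Longrightarrow> b \<in> {0..1} \<Longrightarrow> \<bar>f a - f b\<bar> \<le> E * (1 + (a - b)^2 * K)"
    and E0: "0 \<le> E" and K0: "0 \<le> K" and x: "x \<in> {0..1}" and N: "1 \<le> N" and KN: "K \<le> real N"
  shows "\<bar>(\<Sum>k\<le>N. f (real k / real N) * Bernstein N k x) - f x\<bar> \<le> 2 * E"
proof -
  have x0: "0 \<le> x" "x \<le> 1" using x by auto
  have Bn: "0 \<le> Bernstein N k x" for k using Bernstein_nonneg x0 by blast
  have "(\<Sum>k\<le>N. f (real k / real N) * Bernstein N k x) - f x =
      (\<Sum>k\<le>N. (f (real k / real N) - f x) * Bernstein N k x)"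
    using sum_Bernstein[of N x] by (simp add: left_diff_distrib sum_subtractf sum_distrib_left[symmetric])
  also have "\<bar>\<dots>\<bar> \<le> (\<Sum>k\<le>N. \<bar>(f (real k / real N) - f x) * Bernstein N k x\<bar>)" by (rule sum_abs)
  also have "\<dots> \<le> (\<Sum>k\<le>N. E * (1 + (real k / real N - x)^2 * K) * Bernstein N k x)"
  proof (rule sum_mono)
    fix k assume "k \<in> {..N}"
    then have "real k / real N \<in> {0..1}" using N by auto
    then have "\<bar>f (real k / real N) - f x\<bar> \<le> E * (1 + (real k / real N - x)^2 * K)" using mq x by blast
    then show "\<bar>(f (real k / real N) - f x) * Bernstein N k x\<bar> \<le> E * (1 + (real k / real N - x)^2 * K) * Bernstein N k x"
      using Bn[of k] by (simp add: abs_mult mult_right_mono)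
  qed
  also have "\<dots> = (\<Sum>k\<le>N. E * Bernstein N k x + E * K * ((real k / real N - x)^2 * Bernstein N k x))"
    by (rule sum.cong[OF refl]) (simp add: algebra_simps)
  also have "\<dots> = E * (\<Sum>k\<le>N. Bernstein N k x) + E * K * (\<Sum>k\<le>N. (real k / real N - x)^2 * Bernstein N k x)"
    by (simp only: sum.distrib sum_distrib_left)
  also have "\<dots> = E + E * K * (x * (1 - x) / real N)" using bern_var[OF N] sum_Bernstein[of N x] by simp
  also have "\<dots> \<le> 2 * E"
  proof -
    have "x * (1 - x) \<le> 1" using x0 by (intro mult_le_one) auto
    moreover have "0 \<le> x * (1 - x)" using x0 by simp
    moreover have "K / real N \<le> 1" using KN N by (simp add: divide_le_eq)
    ultimately have "(K / real N) * (x * (1 - x)) \<le> 1" using mult_le_one[of "K / real N" "x * (1 - x)"] by blast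
    then have "K * (x * (1 - x) / real N) \<le> 1" by simp
    then have "E * (K * (x * (1 - x) / real N)) \<le> E * 1" by (rule mult_left_mono[OF _ E0])
    then show ?thesis by (simp add: mult.assoc)
  qed
  finally show ?thesis .
qed



lemma int_encode_diff:
  "int_encode (int P - int M) = (if M \<le> P then 2 * (P - M) else 2 * (M - P - 1) + 1)"
  by (auto simp: int_encode_def sum_encode_def nat_diff_distrib)

lemma decode_rat_code:
  "real_of_rat (decode_rat (prod_encode (int_encode z, 2 ^ n - 1))) = real_of_int z / 2 ^ n"
proof -
  have "int (2 ^ n - 1) + 1 = (2::int) ^ n" by (simp add: of_nat_diff)
  then show ?thesis
    by (simp add: decode_rat_def Fract_of_int_quotient of_rat_divide of_rat_power)
qed

lemma list_code:
  "t \<le> Suc N \<Longrightarrow> rec_nat 0 (\<lambda>t r. Suc (prod_encode (c (N - t), r))) t = list_encode (map c [Suc N - t..<Suc N])"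
proof (induction t)
  case 0 then show ?case by simp
next
  case (Suc t)
  then have tN: "t \<le> N" by simp
  have e1: "Suc N - Suc t = N - t" by simp
  have e2: "Suc (N - t) = Suc N - t" using tN by simp
  have "[N - t..<Suc N] = (N - t) # [Suc (N - t)..<Suc N]" by (rule upt_conv_Cons) simp
  then have "[Suc N - Suc t..<Suc N] = (N - t) # [Suc N - t..<Suc N]" unfolding e1 e2 .
  then show ?case using Suc tN by simp
qed

lemma poly_Poly_sum: fixes cs :: "real list" shows "poly (Poly cs) x = (\<Sum>j<length cs. cs ! j * x ^ j)"
proof (induction cs)
  case Nil then show ?case by simp
next
  case (Cons a cs)
  have "(\<Sum>j<length (a # cs). (a # cs) ! j * x ^ j) = a + (\<Sum>j<length cs. cs ! j * x ^ Suc j)"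
    unfolding length_Cons sum.lessThan_Suc_shift by simp
  also have "\<dots> = a + x * (\<Sum>j<length cs. cs ! j * x ^ j)"
    by (simp add: sum_distrib_left algebra_simps)
  finally show ?case using Cons by simp
qed

lemma bern_expand1:
  assumes "k \<le> N"
  shows "x ^ k * (1 - x) ^ (N - k) =
    (\<Sum>j\<le>N. if k \<le> j then real ((N - k) choose (j - k)) * (-1) ^ (j - k) * x ^ j else 0)"
proof -
  have "(1 - x) ^ (N - k) = (\<Sum>t\<le>N - k. real ((N - k) choose t) * (-x) ^ t * 1 ^ (N - k - t))"
    using binomial_ring[of "-x" 1 "N - k"] by simp
  then have "x ^ k * (1 - x) ^ (N - k) = (\<Sum>t\<le>N - k. x ^ k * (real ((N - k) choose t) * (-x) ^ t * 1 ^ (N - k - t)))"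
    by (simp only: sum_distrib_left)
  also have "\<dots> = (\<Sum>t\<le>N - k. real ((N - k) choose t) * (-1) ^ t * x ^ (t + k))"
  proof (rule sum.cong[OF refl])
    fix t
    have "(-x) ^ t = (-1) ^ t * x ^ t" by (rule power_minus)
    then show "x ^ k * (real ((N - k) choose t) * (-x) ^ t * 1 ^ (N - k - t)) = real ((N - k) choose t) * (-1) ^ t * x ^ (t + k)"
      by (simp add: power_add mult.commute mult.left_commute)
  qed
  also have "\<dots> = (\<Sum>t\<in>{0..N - k}. real ((N - k) choose ((t + k) - k)) * (-1) ^ ((t + k) - k) * x ^ (t + k))"
    by (simp add: atLeast0AtMost)
  also have "\<dots> = (\<Sum>j\<in>{0 + k..(N - k) + k}. real ((N - k) choose (j - k)) * (-1) ^ (j - k) * x ^ j)"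
    by (rule sum.shift_bounds_cl_nat_ivl[symmetric])
  also have "{0 + k..(N - k) + k} = {j \<in> {..N}. k \<le> j}" using assms by auto
  also have "(\<Sum>j\<in>{j \<in> {..N}. k \<le> j}. real ((N - k) choose (j - k)) * (-1) ^ (j - k) * x ^ j) =
     (\<Sum>j\<le>N. if k \<le> j then real ((N - k) choose (j - k)) * (-1) ^ (j - k) * x ^ j else 0)"
    by (rule sum.inter_filter) simp
  finally show ?thesis .
qed

definition bcoef :: "(nat \<Rightarrow> real) \<Rightarrow> nat \<Rightarrow> nat \<Rightarrow> real" where
  "bcoef q N j = (\<Sum>k\<le>j. q k * real (N choose k) * real ((N - k) choose (j - k)) * (-1) ^ (j - k))"

lemma bern_expand:
  "(\<Sum>k\<le>N. q k * Bernstein N k x) = (\<Sum>j\<le>N. bcoef q N j * x ^ j)"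
proof -
  have "(\<Sum>k\<le>N. q k * Bernstein N k x) =
     (\<Sum>k\<le>N. \<Sum>j\<le>N. if k \<le> j then q k * real (N choose k) * real ((N - k) choose (j - k)) * (-1) ^ (j - k) * x ^ j else 0)"
  proof (rule sum.cong[OF refl])
    fix k assume "k \<in> {..N}"
    then have kN: "k \<le> N" by simp
    have "q k * Bernstein N k x = q k * real (N choose k) * (x ^ k * (1 - x) ^ (N - k))"
      by (simp add: Bernstein_def)
    also have "\<dots> = (\<Sum>j\<le>N. q k * real (N choose k) * (if k \<le> j then real ((N - k) choose (j - k)) * (-1) ^ (j - k) * x ^ j else 0))"
      unfolding bern_expand1[OF kN] by (simp add: sum_distrib_left)
    also have "\<dots> = (\<Sum>j\<le>N. if k \<le> j then q k * real (N choose k) * real ((N - k) choose (j - k)) * (-1) ^ (j - k) * x ^ j else 0)"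
      by (rule sum.cong[OF refl]) simp
    finally show "q k * Bernstein N k x = \<dots>" .
  qed
  also have "\<dots> = (\<Sum>j\<le>N. \<Sum>k\<le>N. if k \<le> j then q k * real (N choose k) * real ((N - k) choose (j - k)) * (-1) ^ (j - k) * x ^ j else 0)"
    by (rule sum.swap)
  also have "\<dots> = (\<Sum>j\<le>N. bcoef q N j * x ^ j)"
  proof (rule sum.cong[OF refl])
    fix j assume "j \<in> {..N}"
    then have jN: "j \<le> N" by simp
    have "(\<Sum>k\<le>N. if k \<le> j then q k * real (N choose k) * real ((N - k) choose (j - k)) * (-1) ^ (j - k) * x ^ j else 0)
       = (\<Sum>k\<in>{k \<in> {..N}. k \<le> j}. q k * real (N choose k) * real ((N - k) choose (j - k)) * (-1) ^ (j - k) * x ^ j)"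
      by (rule sum.inter_filter[symmetric]) simp
    also have "{k \<in> {..N}. k \<le> j} = {..j}" using jN by auto
    also have "(\<Sum>k\<le>j. q k * real (N choose k) * real ((N - k) choose (j - k)) * (-1) ^ (j - k) * x ^ j) = bcoef q N j * x ^ j"
      unfolding bcoef_def by (simp add: sum_distrib_right)
    finally show "(\<Sum>k\<le>N. if k \<le> j then q k * real (N choose k) * real ((N - k) choose (j - k)) * (-1) ^ (j - k) * x ^ j else 0) = bcoef q N j * x ^ j" .
  qed
  finally show ?thesis .
qed

lemma real_div_bounds: "0 < d \<Longrightarrow> real (m div d) \<le> real m / real d \<and> real m / real d < real (m div d) + 1"
proof -
  assume d: "0 < d"
  have f: "\<lfloor>real m / real d\<rfloor> = int (m div d)" using floor_divide_of_nat_eq[of m d] by simp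
  show ?thesis using f by linarith
qed

lemma rounding:
  fixes v n :: nat
  defines "a \<equiv> fst (prod_decode v)" and "b \<equiv> snd (prod_decode v)"
  defines "zp \<equiv> (if even a then a div 2 * 2 ^ n div (b + 1) else 0)"
  defines "zm \<equiv> (if even a then 0 else (a div 2 + 1) * 2 ^ n div (b + 1))"
  shows "\<bar>real_of_rat (decode_rat v) - (real zp - real zm) / 2 ^ n\<bar> < 1 / 2 ^ n"
proof -
  have pd: "prod_decode v = (a, b)" unfolding a_def b_def by simp
  have dv: "real_of_rat (decode_rat v) = real_of_int (int_decode a) / (real b + 1)"
    by (simp add: decode_rat_def pd Fract_of_int_quotient of_rat_divide of_rat_add)
  have p: "(0::real) < 2 ^ n" by simp
  have b1: "(0::real) < real b + 1" by simp
  show ?thesis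
  proof (cases "even a")
    case True
    have ia: "int_decode a = int (a div 2)" using True by (simp add: int_decode_def sum_decode_def)
    let ?m = "a div 2 * 2 ^ n"
    have rb: "real (?m div (b + 1)) \<le> real ?m / real (b + 1) \<and> real ?m / real (b + 1) < real (?m div (b + 1)) + 1"
      by (rule real_div_bounds) simp
    have e: "real ?m / real (b + 1) = (real (a div 2) / (real b + 1)) * 2 ^ n" by simp
    have zp: "zp = ?m div (b + 1)" "zm = 0" unfolding zp_def zm_def using True by auto
    have "real zp / 2 ^ n \<le> real (a div 2) / (real b + 1)" "real (a div 2) / (real b + 1) < real zp / 2 ^ n + 1 / 2 ^ n"
      using rb unfolding e zp(1)[symmetric] using p
      by (simp_all add: divide_le_eq pos_less_divide_eq field_simps)
    then show ?thesis unfolding dv ia zp(2) by (simp add: abs_less_iff)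
  next
    case False
    have ia: "int_decode a = - int (a div 2) - 1" using False by (simp add: int_decode_def sum_decode_def)
    let ?m = "(a div 2 + 1) * 2 ^ n"
    have rb: "real (?m div (b + 1)) \<le> real ?m / real (b + 1) \<and> real ?m / real (b + 1) < real (?m div (b + 1)) + 1"
      by (rule real_div_bounds) simp
    have e: "real ?m / real (b + 1) = ((real (a div 2) + 1) / (real b + 1)) * 2 ^ n" by (simp add: field_simps)
    have zp: "zm = ?m div (b + 1)" "zp = 0" unfolding zp_def zm_def using False by auto
    have "real zm / 2 ^ n \<le> (real (a div 2) + 1) / (real b + 1)" "(real (a div 2) + 1) / (real b + 1) < real zm / 2 ^ n + 1 / 2 ^ n"
      using rb unfolding e zp(1)[symmetric] using p
      by (simp_all add: divide_le_eq pos_less_divide_eq field_simps)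
    moreover have "real_of_int (- int (a div 2) - 1) / (real b + 1) = - ((real (a div 2) + 1) / (real b + 1))"
      by (simp add: field_simps)
    ultimately show ?thesis unfolding dv ia zp(2) by (simp add: abs_less_iff)
  qed
qed



theorem mainTheorem7:
  fixes f :: "real \<Rightarrow> real"
  assumes "punctually_computable f"
  shows "uniformly_punctually_computable f"
proof -
  obtain \<Phi> where \<Phi>: "\<And>x \<psi>. x \<in> {0..1} \<Longrightarrow> is_name \<psi> x \<Longrightarrow>
      fast_cauchy (\<lambda>n. decode_rat (peval \<Phi> \<psi> [n])) \<and>
      (\<lambda>n. real_of_rat (decode_rat (peval \<Phi> \<psi> [n]))) \<longlonglongrightarrow> f x"
    using assms unfolding punctually_computable_def by blast
  obtain Bd where Bd: "pr (\<lambda>xs. Bd (arg 0 xs))" "good \<Phi> Bd" using bound_exists by blast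
  define Corc where "Corc p j = fst (prod_decode p) * 2 ^ j div 4 ^ snd (prod_decode p)" for p j :: nat
  define Fv where "Fv n p = peval \<Phi> (Corc p) [n]" for n p
  have prC: "pr (\<lambda>xs. Corc (arg 0 xs) (arg 1 xs))" unfolding Corc_def by (intro pr_intros)
  have prFv0: "pr (\<lambda>xs. Fv (arg 0 xs) (arg 1 xs))" unfolding Fv_def using pr_oracle_subst[OF prC, of \<Phi>] .
  have pr_Fv: "pr (\<lambda>xs. Fv (A xs) (B xs))" if "pr A" "pr B" for A B using pr_comp2[OF prFv0 that] .
  have pr_Bd: "pr (\<lambda>xs. Bd (A xs))" if "pr A" for A using pr_comp1[OF Bd(1) that] .
  define v where "v i k = Fv (i + 5) (prod_encode (k, Bd (i + 5)))" for i k
  define zp where "zp i k = (if even (fst (prod_decode (v i k))) then fst (prod_decode (v i k)) div 2 * 2 ^ (i + 5) div (snd (prod_decode (v i k)) + 1) else 0)" for i k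
  define zm where "zm i k = (if even (fst (prod_decode (v i k))) then 0 else (fst (prod_decode (v i k)) div 2 + 1) * 2 ^ (i + 5) div (snd (prod_decode (v i k)) + 1))" for i k
  define W where "W i j k = (4 ^ Bd (i + 5) choose k) * ((4 ^ Bd (i + 5) - k) choose (j - k))" for i j k
  define Pp where "Pp i j = (\<Sum>k<Suc j. (if even (j - k) then zp i k else zm i k) * W i j k)" for i j
  define Mm where "Mm i j = (\<Sum>k<Suc j. (if even (j - k) then zm i k else zp i k) * W i j k)" for i j
  define cc where "cc i j = prod_encode (if Mm i j \<le> Pp i j then 2 * (Pp i j - Mm i j) else 2 * (Mm i j - Pp i j - 1) + 1, 2 ^ (i + 5) - 1)" for i j
  define code where "code i = rec_nat 0 (\<lambda>t r. Suc (prod_encode (cc i (4 ^ Bd (i + 5) - t), r))) (Suc (4 ^ Bd (i + 5)))" for i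

  have pr_v: "pr (\<lambda>xs. v (A xs) (B xs))" if "pr A" "pr B" for A B
    unfolding v_def by (intro pr_Fv pr_Bd pr_intros that)
  have pr_zp: "pr (\<lambda>xs. zp (A xs) (B xs))" if "pr A" "pr B" for A B
    unfolding zp_def by (intro pr_v pr_intros that)
  have pr_zm: "pr (\<lambda>xs. zm (A xs) (B xs))" if "pr A" "pr B" for A B
    unfolding zm_def by (intro pr_v pr_intros that)
  have pr_W: "pr (\<lambda>xs. W (A xs) (B xs) (C xs))" if "pr A" "pr B" "pr C" for A B C
    unfolding W_def by (intro pr_Bd pr_intros that)
  have "pr (\<lambda>xs. Pp (arg 0 xs) (arg 1 xs))" unfolding Pp_def
    by (rule pr_sum2[where t="\<lambda>k p q. (if even (p - k) then zp q k else zm q k) * W q p k"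
          and N="\<lambda>xs. Suc (arg 1 xs)" and P="\<lambda>xs. arg 1 xs" and Q="\<lambda>xs. arg 0 xs"])
       (intro pr_W pr_zp pr_zm pr_intros)+
  then have pr_Pp: "pr (\<lambda>xs. Pp (A xs) (B xs))" if "pr A" "pr B" for A B using pr_comp2 that by blast
  have "pr (\<lambda>xs. Mm (arg 0 xs) (arg 1 xs))" unfolding Mm_def
    by (rule pr_sum2[where t="\<lambda>k p q. (if even (p - k) then zm q k else zp q k) * W q p k"
          and N="\<lambda>xs. Suc (arg 1 xs)" and P="\<lambda>xs. arg 1 xs" and Q="\<lambda>xs. arg 0 xs"])
       (intro pr_W pr_zp pr_zm pr_intros)+
  then have pr_Mm: "pr (\<lambda>xs. Mm (A xs) (B xs))" if "pr A" "pr B" for A B using pr_comp2 that by blast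
  have pr_cc: "pr (\<lambda>xs. cc (A xs) (B xs))" if "pr A" "pr B" for A B
    unfolding cc_def by (intro pr_Pp pr_Mm pr_intros that)
  have "pr (\<lambda>xs. code (arg 0 xs))" unfolding code_def
    by (rule pr_rec2[where g="\<lambda>p q. 0" and h="\<lambda>t r p q. Suc (prod_encode (cc p (4 ^ Bd (p + 5) - t), r))"
          and N="\<lambda>xs. Suc (4 ^ Bd (arg 0 xs + 5))" and P="\<lambda>xs. arg 0 xs" and Q="\<lambda>xs. arg 0 xs"])
       (intro pr_cc pr_Bd pr_intros)+
  then obtain S where S: "oracle_free S" "\<And>\<rho> xs. peval S \<rho> xs = code (arg 0 xs)"
    unfolding pr_def by blast
  have main: "\<bar>f x - poly (decode_poly (code i)) x\<bar> \<le> 19 / 2 ^ (i + 5)" if x: "x \<in> {0..1}" for i x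
  proof -
    define n where "n = i + 5"
    define M where "M = Bd n"
    define N where "N = (4::nat) ^ M"
    have N1: "1 \<le> N" unfolding N_def by simp
    define V where "V \<psi> = real_of_rat (decode_rat (peval \<Phi> \<psi> [n]))" for \<psi>
    have approx: "\<bar>V \<psi> - f y\<bar> \<le> 2 / 2 ^ n" if "y \<in> {0..1}" "is_name \<psi> y" for y \<psi>
      using fast_cauchy_err[of "\<lambda>n. decode_rat (peval \<Phi> \<psi> [n])" "f y" n] \<Phi>[OF that] unfolding V_def by blast
    have use: "V \<psi> = V \<psi>'" if "bnd \<psi>" "bnd \<psi>'" "\<forall>j\<le>M. \<psi> j = \<psi>' j" for \<psi> \<psi>'
    proof -
      have "\<forall>x\<in>set [n]. x \<le> n" by simp
      then have "peval \<Phi> \<psi> [n] = peval \<Phi> \<psi>' [n]" using Bd(2) that unfolding good_def M_def by blast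
      then show ?thesis unfolding V_def by simp
    qed
    have e0: "0 \<le> 2 / (2::real) ^ n" by simp
    have md: "\<bar>f a - f b\<bar> \<le> 4 * (2 / 2 ^ n)" if "a \<in> {0..1}" "b \<in> {0..1}" "\<bar>a - b\<bar> \<le> 1 / 2 ^ M" for a b
      by (rule modulus_lemma[where f=f and V=V and e="2/2^n" and M=M, OF approx use e0 that])
    have qm: "\<bar>f a - f b\<bar> \<le> (8 / 2 ^ n) * (1 + (a - b)^2 * real N)" if ab: "a \<in> {0..1}" "b \<in> {0..1}" for a b
    proof -
      have "\<bar>f a - f b\<bar> \<le> (8 / 2 ^ n) * (1 + (a - b)^2 / (1 / 2 ^ M)^2)"
        by (rule quad_modulus[where f=f and \<delta>="1/2^M" and E="8/2^n"]) (use md ab in auto)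
      moreover have "(2::real) ^ M * 2 ^ M = 4 ^ M" by (simp add: power_mult_distrib[symmetric])
      then have "(a - b)^2 / (1 / 2 ^ M)^2 = (a - b)^2 * real N" unfolding N_def
        by (simp add: power_divide power2_eq_square)
      ultimately show ?thesis by simp
    qed
    have K0: "0 \<le> real N" by simp
    have ba: "\<bar>(\<Sum>k\<le>N. f (real k / real N) * Bernstein N k x) - f x\<bar> \<le> 2 * (8 / 2 ^ n)"
      by (rule bern_approx[where f=f and E="8/2^n" and K="real N", OF qm _ K0 x N1]) simp_all
    define q where "q k = (real (zp i k) - real (zm i k)) / 2 ^ n" for k
    have samp: "\<bar>q k - f (real k / real N)\<bar> \<le> 3 / 2 ^ n" if kN: "k \<le> N" for k
    proof -
      have kx: "real k / real N \<in> {0..1}" using kN N1 by auto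
      have fl: "Corc (prod_encode (k, M)) = fln (real k / real N)"
      proof (rule ext)
        fix j
        have "Corc (prod_encode (k, M)) j = k * 2 ^ j div 4 ^ M" by (simp add: Corc_def)
        also have "\<dots> = nat \<lfloor>real k / real N * 2 ^ j\<rfloor>"
        proof -
          have "real k / real N * 2 ^ j = real (k * 2 ^ j) / real (4 ^ M)" by (simp add: N_def)
          moreover have "\<lfloor>real (k * 2 ^ j) / real (4 ^ M)\<rfloor> = int (k * 2 ^ j div 4 ^ M)"
            by (rule floor_divide_of_nat_eq[where 'a=real])
          ultimately have "\<lfloor>real k / real N * 2 ^ j\<rfloor> = int (k * 2 ^ j div 4 ^ M)" by (simp add: N_def)
          then show ?thesis by simp
        qed
        finally show "Corc (prod_encode (k, M)) j = fln (real k / real N) j" unfolding fln_def .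
      qed
      have vv: "v i k = peval \<Phi> (fln (real k / real N)) [n]"
        unfolding v_def Fv_def n_def[symmetric] M_def[symmetric] fl ..
      have r0: "\<bar>real_of_rat (decode_rat (v i k)) - q k\<bar> < 1 / 2 ^ n"
        using rounding[of "v i k" n] unfolding q_def zp_def zm_def n_def by simp
      have a: "\<bar>V (fln (real k / real N)) - f (real k / real N)\<bar> \<le> 2 / 2 ^ n"
        using approx[OF kx fln_name[OF kx]] .
      have "V (fln (real k / real N)) = real_of_rat (decode_rat (v i k))" by (simp add: V_def vv)
      then show ?thesis using r0 a by (auto simp: abs_le_iff abs_less_iff)
    qed
    have dp: "decode_poly (code i) = Poly (map (\<lambda>j. (real (Pp i j) - real (Mm i j)) / 2 ^ n) [0..<Suc N])"
    proof -
      have "code i = list_encode (map (cc i) [Suc N - Suc N..<Suc N])"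
        using list_code[of "Suc N" N "cc i"] unfolding code_def N_def M_def n_def by simp
      then have l: "list_decode (code i) = map (cc i) [0..<Suc N]" by simp
      have d: "real_of_rat (decode_rat (cc i j)) = (real (Pp i j) - real (Mm i j)) / 2 ^ n" for j
      proof -
        have "cc i j = prod_encode (int_encode (int (Pp i j) - int (Mm i j)), 2 ^ n - 1)"
          unfolding cc_def int_encode_diff n_def by simp
        then show ?thesis using decode_rat_code[of "int (Pp i j) - int (Mm i j)" n] by simp
      qed
      show ?thesis unfolding decode_poly_def l by (simp add: d o_def)
    qed
    have coef: "(real (Pp i j) - real (Mm i j)) / 2 ^ n = bcoef q N j" for j
    proof -
      have "real (Pp i j) - real (Mm i j) = (\<Sum>k<Suc j. (real (zp i k) - real (zm i k)) * (-1) ^ (j - k) * real (W i j k))"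
        unfolding Pp_def Mm_def of_nat_sum sum_subtractf[symmetric]
        by (rule sum.cong[OF refl]) (auto simp: algebra_simps)
      then have "(real (Pp i j) - real (Mm i j)) / 2 ^ n = (\<Sum>k<Suc j. (real (zp i k) - real (zm i k)) * (-1) ^ (j - k) * real (W i j k) / 2 ^ n)"
        by (simp only: sum_divide_distrib)
      also have "\<dots> = bcoef q N j"
        unfolding bcoef_def lessThan_Suc_atMost
        by (rule sum.cong[OF refl]) (simp add: q_def W_def N_def M_def n_def algebra_simps)
      finally show ?thesis .
    qed
    have polyeq: "poly (decode_poly (code i)) x = (\<Sum>k\<le>N. q k * Bernstein N k x)"
    proof -
      have "poly (decode_poly (code i)) x = (\<Sum>j<Suc N. ((real (Pp i j) - real (Mm i j)) / 2 ^ n) * x ^ j)"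
        unfolding dp poly_Poly_sum by (rule sum.cong) (auto simp del: upt_Suc)
      also have "\<dots> = (\<Sum>j\<le>N. bcoef q N j * x ^ j)" unfolding lessThan_Suc_atMost coef ..
      also have "\<dots> = (\<Sum>k\<le>N. q k * Bernstein N k x)" by (rule bern_expand[symmetric])
      finally show ?thesis .
    qed
    have x0: "0 \<le> x" "x \<le> 1" using x by auto
    have "\<bar>(\<Sum>k\<le>N. q k * Bernstein N k x) - (\<Sum>k\<le>N. f (real k / real N) * Bernstein N k x)\<bar> =
        \<bar>\<Sum>k\<le>N. (q k - f (real k / real N)) * Bernstein N k x\<bar>"
      by (simp add: sum_subtractf left_diff_distrib)
    also have "\<dots> \<le> (\<Sum>k\<le>N. \<bar>(q k - f (real k / real N)) * Bernstein N k x\<bar>)" by (rule sum_abs)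
    also have "\<dots> \<le> (\<Sum>k\<le>N. 3 / 2 ^ n * Bernstein N k x)"
    proof (rule sum_mono)
      fix k assume "k \<in> {..N}"
      then have "\<bar>q k - f (real k / real N)\<bar> \<le> 3 / 2 ^ n" using samp by simp
      moreover have "0 \<le> Bernstein N k x" using Bernstein_nonneg x0 by blast
      ultimately have "\<bar>q k - f (real k / real N)\<bar> * Bernstein N k x \<le> 3 / 2 ^ n * Bernstein N k x"
        by (rule mult_right_mono)
      then show "\<bar>(q k - f (real k / real N)) * Bernstein N k x\<bar> \<le> 3 / 2 ^ n * Bernstein N k x"
        using \<open>0 \<le> Bernstein N k x\<close> by (simp add: abs_mult)
    qed
    also have "\<dots> = 3 / 2 ^ n * (\<Sum>k\<le>N. Bernstein N k x)" by (simp only: sum_distrib_left)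
    also have "\<dots> = 3 / 2 ^ n" by simp
    finally have t1: "\<bar>(\<Sum>k\<le>N. q k * Bernstein N k x) - (\<Sum>k\<le>N. f (real k / real N) * Bernstein N k x)\<bar> \<le> 3 / 2 ^ n" .
    have "\<bar>f x - poly (decode_poly (code i)) x\<bar> \<le> 3 / 2 ^ n + 2 * (8 / 2 ^ n)"
      unfolding polyeq using t1 ba by (auto simp: abs_le_iff)
    also have "\<dots> = 19 / 2 ^ (i + 5)" unfolding n_def by simp
    finally show ?thesis .
  qed
  show ?thesis unfolding uniformly_punctually_computable_def
  proof (intro exI[of _ S] conjI allI)
    show "oracle_free S" by (rule S(1))
    fix i
    have pe: "peval S (\<lambda>_. 0) [i] = code i" using S(2) by simp
    show "bdd_above ((\<lambda>x. \<bar>f x - poly (decode_poly (peval S (\<lambda>_. 0) [i])) x\<bar>) ` {0..1})"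
      unfolding pe using main by (intro bdd_aboveI2[where M="19 / 2 ^ (i + 5)"]) auto
    have "(SUP x\<in>{0..1}. \<bar>f x - poly (decode_poly (peval S (\<lambda>_. 0) [i])) x\<bar>) \<le> 19 / 2 ^ (i + 5)"
      unfolding pe using main by (intro cSUP_least) auto
    also have "\<dots> < 1 / 2 ^ i" by (simp add: power_add divide_simps)
    finally show "(SUP x\<in>{0..1}. \<bar>f x - poly (decode_poly (peval S (\<lambda>_. 0) [i])) x\<bar>) < 1 / 2 ^ i" .
  qed
qed


end
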